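(* Let $M_t$ be a smooth spacelike $n$-dimensional mean curvature flow in $\mathbb{R}^{n,m}$, parametrised by $\partial_tX=H$, and for $A\in\{1,\dots,m\}$ let $w_A^2=\|e_A^\perp\|^2$ and $u_A=-\langle e_A,X\rangle$. Then $$\Big(\frac{d}{dt}-\Delta\Big)\big(w_A^2e^{u_A^2}\big)\le-2e^{u_A^2}w_A^2(w_A^2-1).$$
   Context: $\mathbb{R}^{n,m}$ is $\mathbb{R}^{n+m}$ with $\langle x,y\rangle=\sum_{i\le n}x^iy^i-\sum_{A\le m}x^{n+A}y^{n+A}$ and standard timelike orthonormal vectors $e_1,\dots,e_m$. $X$ is the position vector; $e_A^\perp$ is the normal projection of $e_A$; $\|z\|^2=-\langle z,z\rangle$ for normal $z$. $H$ is the mean curvature vector, $\Delta$ the Laplace–Beltrami operator of $M_t$. *)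

theory Defs
  imports "HOL-Analysis.Analysis"
begin

text \<open>Ambient space R^{n,m} realised as real^'n \<times> real^'m: first factor spacelike,
second factor timelike.  Parameter space of the flow: time \<times> local coordinates in real^'n.\<close>

type_synonym ('n, 'm) amb = "(real^'n) \<times> (real^'m)"
type_synonym 'n par = "real \<times> (real^'n)"

definition mink :: "('n::finite, 'm::finite) amb \<Rightarrow> ('n, 'm) amb \<Rightarrow> real" where
  "mink x y = fst x \<bullet> fst y - snd x \<bullet> snd y"

definition eA :: "'m::finite \<Rightarrow> ('n::finite, 'm) amb" where
  "eA A = (0, axis A 1)"

definition pd :: "('a::real_normed_vector \<Rightarrow> 'b::real_normed_vector) \<Rightarrow> 'a \<Rightarrow> 'a \<Rightarrow> 'b" where
  "pd f v x = vector_derivative (\<lambda>s. f (x + s *\<^sub>R v)) (at 0)"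

fun iterpd :: "('a::real_normed_vector \<Rightarrow> 'b::real_normed_vector) \<Rightarrow> 'a list \<Rightarrow> 'a \<Rightarrow> 'b" where
  "iterpd f [] = f"
| "iterpd f (v # vs) = pd (iterpd f vs) v"

definition smooth_on :: "'a::euclidean_space set \<Rightarrow> ('a \<Rightarrow> 'b::real_normed_vector) \<Rightarrow> bool" where
  "smooth_on S f \<longleftrightarrow> open S \<and>
     (\<forall>vs. continuous_on S (iterpd f vs) \<and>
        (\<forall>x\<in>S. \<forall>v. (\<lambda>s. iterpd f vs (x + s *\<^sub>R v)) differentiable (at 0)))"

definition dirx :: "'n::finite \<Rightarrow> 'n par" where
  "dirx i = (0, axis i 1)"

definition dirt :: "'n::finite par" where
  "dirt = (1, 0)"

definition dX :: "('n::finite par \<Rightarrow> ('n, 'm::finite) amb) \<Rightarrow> 'n \<Rightarrow> 'n par \<Rightarrow> ('n, 'm) amb" where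
  "dX X i z = pd X (dirx i) z"

definition ddX :: "('n::finite par \<Rightarrow> ('n, 'm::finite) amb) \<Rightarrow> 'n \<Rightarrow> 'n \<Rightarrow> 'n par \<Rightarrow> ('n, 'm) amb" where
  "ddX X i j z = pd (dX X j) (dirx i) z"

definition gmat :: "('n::finite par \<Rightarrow> ('n, 'm::finite) amb) \<Rightarrow> 'n par \<Rightarrow> real^'n^'n" where
  "gmat X z = (\<chi> i j. mink (dX X i z) (dX X j z))"

definition ginv :: "('n::finite par \<Rightarrow> ('n, 'm::finite) amb) \<Rightarrow> 'n par \<Rightarrow> real^'n^'n" where
  "ginv X z = matrix_inv (gmat X z)"

definition spacelike_at :: "('n::finite par \<Rightarrow> ('n, 'm::finite) amb) \<Rightarrow> 'n par \<Rightarrow> bool" where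
  "spacelike_at X z \<longleftrightarrow> (\<forall>v::real^'n. v \<noteq> 0 \<longrightarrow>
     mink (\<Sum>i\<in>UNIV. v$i *\<^sub>R dX X i z) (\<Sum>i\<in>UNIV. v$i *\<^sub>R dX X i z) > 0)"

definition tproj :: "('n::finite par \<Rightarrow> ('n, 'm::finite) amb) \<Rightarrow> 'n par \<Rightarrow> ('n, 'm) amb \<Rightarrow> ('n, 'm) amb" where
  "tproj X z v = (\<Sum>i\<in>UNIV. \<Sum>j\<in>UNIV. (ginv X z $ i $ j * mink v (dX X j z)) *\<^sub>R dX X i z)"

definition nproj :: "('n::finite par \<Rightarrow> ('n, 'm::finite) amb) \<Rightarrow> 'n par \<Rightarrow> ('n, 'm) amb \<Rightarrow> ('n, 'm) amb" where
  "nproj X z v = v - tproj X z v"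

definition mcv :: "('n::finite par \<Rightarrow> ('n, 'm::finite) amb) \<Rightarrow> 'n par \<Rightarrow> ('n, 'm) amb" where
  "mcv X z = (\<Sum>i\<in>UNIV. \<Sum>j\<in>UNIV. ginv X z $ i $ j *\<^sub>R nproj X z (ddX X i j z))"

definition christoffel :: "('n::finite par \<Rightarrow> ('n, 'm::finite) amb) \<Rightarrow> 'n \<Rightarrow> 'n \<Rightarrow> 'n \<Rightarrow> 'n par \<Rightarrow> real" where
  "christoffel X k i j z = (1/2) * (\<Sum>l\<in>UNIV. ginv X z $ k $ l *
      (pd (\<lambda>y. gmat X y $ j $ l) (dirx i) z + pd (\<lambda>y. gmat X y $ i $ l) (dirx j) z
       - pd (\<lambda>y. gmat X y $ i $ j) (dirx l) z))"

definition lapl :: "('n::finite par \<Rightarrow> ('n, 'm::finite) amb) \<Rightarrow> ('n par \<Rightarrow> real) \<Rightarrow> 'n par \<Rightarrow> real" where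
  "lapl X f z = (\<Sum>i\<in>UNIV. \<Sum>j\<in>UNIV. ginv X z $ i $ j *
      (pd (pd f (dirx j)) (dirx i) z - (\<Sum>k\<in>UNIV. christoffel X k i j z * pd f (dirx k) z)))"

definition ddt :: "('n::finite par \<Rightarrow> 'b::real_normed_vector) \<Rightarrow> 'n par \<Rightarrow> 'b" where
  "ddt f z = pd f dirt z"

text \<open>w_A^2 = \<parallel>e_A^\<perp>\<parallel>^2 = -<e_A^\<perp>, e_A^\<perp>> and u_A = -<e_A, X>.\<close>
definition wsq :: "('n::finite par \<Rightarrow> ('n, 'm::finite) amb) \<Rightarrow> 'm \<Rightarrow> 'n par \<Rightarrow> real" where
  "wsq X A z = - mink (nproj X z (eA A)) (nproj X z (eA A))"

definition uA :: "('n::finite par \<Rightarrow> ('n, 'm::finite) amb) \<Rightarrow> 'm \<Rightarrow> 'n par \<Rightarrow> real" where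
  "uA X A z = - mink (eA A) (X z)"

end

theory Submission
  imports Defs
begin


definition hvd :: "('a::real_normed_vector \<Rightarrow> 'b::real_normed_vector) \<Rightarrow> 'a \<Rightarrow> 'a \<Rightarrow> 'b \<Rightarrow> bool" where
  "hvd f v x d \<longleftrightarrow> ((\<lambda>s. f (x + s *\<^sub>R v)) has_vector_derivative d) (at 0)"

definition ldiff :: "('a::real_normed_vector \<Rightarrow> 'b::real_normed_vector) \<Rightarrow> 'a \<Rightarrow> 'a \<Rightarrow> bool" where
  "ldiff f v x \<longleftrightarrow> (\<lambda>s. f (x + s *\<^sub>R v)) differentiable (at (0::real))"

lemma ldiff_hvd: "ldiff f v x \<Longrightarrow> hvd f v x (pd f v x)"
  by (simp add: ldiff_def hvd_def pd_def vector_derivative_works)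

lemma hvd_pd: "hvd f v x d \<Longrightarrow> pd f v x = d"
  by (simp add: hvd_def pd_def vector_derivative_at)

lemma hvd_ldiff: "hvd f v x d \<Longrightarrow> ldiff f v x"
  unfolding hvd_def ldiff_def using differentiableI_vector by blast

lemma hvd_cong: "hvd f v x d \<Longrightarrow> d = d' \<Longrightarrow> hvd f v x d'" by simp

lemma hvd_const: "hvd (\<lambda>y. c) v x 0"
  unfolding hvd_def by (rule has_vector_derivative_const)

lemma hvd_id: "hvd (\<lambda>y. y) v x v"
  unfolding hvd_def by (auto intro!: derivative_eq_intros simp: has_vector_derivative_def)

lemma hvd_add: "hvd f v x a \<Longrightarrow> hvd g v x b \<Longrightarrow> hvd (\<lambda>y. f y + g y) v x (a + b)"
  unfolding hvd_def by (rule has_vector_derivative_add)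

lemma hvd_diff: "hvd f v x a \<Longrightarrow> hvd g v x b \<Longrightarrow> hvd (\<lambda>y. f y - g y) v x (a - b)"
  unfolding hvd_def by (rule has_vector_derivative_diff)

lemma hvd_minus: "hvd f v x a \<Longrightarrow> hvd (\<lambda>y. - f y) v x (- a)"
  unfolding hvd_def by (rule has_vector_derivative_minus)

lemma hvd_mult: "hvd (f::_\<Rightarrow>real) v x a \<Longrightarrow> hvd g v x b \<Longrightarrow> hvd (\<lambda>y. f y * g y) v x (a * g x + f x * b)"
  unfolding hvd_def using has_vector_derivative_mult[of "\<lambda>s. f (x + s *\<^sub>R v)" a 0 UNIV "\<lambda>s. g (x + s *\<^sub>R v)" b]
  by (simp add: mult.commute add.commute)

lemma hvd_scaleR: "hvd (f::_\<Rightarrow>real) v x a \<Longrightarrow> hvd g v x b \<Longrightarrow> hvd (\<lambda>y. f y *\<^sub>R g y) v x (a *\<^sub>R g x + f x *\<^sub>R b)"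
  unfolding hvd_def using has_vector_derivative_scaleR[of "\<lambda>s. f (x + s *\<^sub>R v)" a 0 UNIV "\<lambda>s. g (x + s *\<^sub>R v)" b]
  by (simp add: add.commute has_real_derivative_iff_has_vector_derivative)

lemma hvd_linear: "bounded_linear l \<Longrightarrow> hvd f v x a \<Longrightarrow> hvd (\<lambda>y. l (f y)) v x (l a)"
  unfolding hvd_def by (rule bounded_linear.has_vector_derivative)

lemma hvd_sum: "finite K \<Longrightarrow> (\<And>k. k \<in> K \<Longrightarrow> hvd (f k) v x (a k)) \<Longrightarrow> hvd (\<lambda>y. \<Sum>k\<in>K. f k y) v x (\<Sum>k\<in>K. a k)"
  unfolding hvd_def by (rule has_vector_derivative_sum)

lemma hvd_exp: "hvd (f::_\<Rightarrow>real) v x a \<Longrightarrow> hvd (\<lambda>y. exp (f y)) v x (exp (f x) * a)"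
proof -
  assume a: "hvd f v x a"
  have "((\<lambda>s. f (x + s *\<^sub>R v)) has_real_derivative a) (at 0)"
    using a by (simp add: hvd_def has_real_derivative_iff_has_vector_derivative)
  then have "((\<lambda>s. exp (f (x + s *\<^sub>R v))) has_real_derivative (exp (f x) * a)) (at 0)"
    by (auto intro!: derivative_eq_intros)
  then show ?thesis by (simp add: hvd_def has_real_derivative_iff_has_vector_derivative)
qed

lemma hvd_inverse: "hvd f v x a \<Longrightarrow> f x \<noteq> (0::real) \<Longrightarrow> hvd (\<lambda>y. inverse (f y)) v x (- ((inverse (f x))\<^sup>2) * a)"
proof -
  assume a: "hvd f v x a" and b: "f x \<noteq> 0"
  have "((\<lambda>s. f (x + s *\<^sub>R v)) has_real_derivative a) (at 0)"
    using a by (simp add: hvd_def has_real_derivative_iff_has_vector_derivative)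
  then have "((\<lambda>s. inverse (f (x + s *\<^sub>R v))) has_real_derivative (- ((inverse (f x))\<^sup>2) * a)) (at 0)"
    using b by (auto intro!: derivative_eq_intros simp: power2_eq_square field_simps)
  then show ?thesis by (simp add: hvd_def has_real_derivative_iff_has_vector_derivative)
qed

lemma hvd_power2: "hvd (f::_\<Rightarrow>real) v x a \<Longrightarrow> hvd (\<lambda>y. (f y)^2) v x (2 * f x * a)"
  using hvd_mult[of f v x a f a] by (simp add: power2_eq_square algebra_simps)

lemma hvd_fst: "hvd f v x a \<Longrightarrow> hvd (\<lambda>y. fst (f y)) v x (fst a)"
  by (rule hvd_linear[OF bounded_linear_fst])

lemma hvd_snd: "hvd f v x a \<Longrightarrow> hvd (\<lambda>y. snd (f y)) v x (snd a)"
  by (rule hvd_linear[OF bounded_linear_snd])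

lemma hvd_vec_nth: "hvd f v x a \<Longrightarrow> hvd (\<lambda>y. f y $ i) v x (a $ i)"
  by (rule hvd_linear[OF bounded_linear_vec_nth])

lemma hvd_inner: "hvd f v x a \<Longrightarrow> hvd g v x b \<Longrightarrow> hvd (\<lambda>y. inner (f y) (g y)) v x (inner a (g x) + inner (f x) b)"
  unfolding hvd_def
  using bounded_bilinear.has_vector_derivative[OF bounded_bilinear_inner, of "\<lambda>s. f (x + s *\<^sub>R v)" a 0 UNIV "\<lambda>s. g (x + s *\<^sub>R v)" b]
  by (simp add: add.commute)

lemma hvd_mink: "hvd f v x a \<Longrightarrow> hvd g v x b \<Longrightarrow> hvd (\<lambda>y. mink (f y) (g y)) v x (mink a (g x) + mink (f x) b)"
proof -
  assume a: "hvd f v x a" and b: "hvd g v x b"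
  have 1: "hvd (\<lambda>y. fst (f y) \<bullet> fst (g y)) v x (fst a \<bullet> fst (g x) + fst (f x) \<bullet> fst b)"
    by (intro hvd_inner hvd_fst a b)
  have 2: "hvd (\<lambda>y. snd (f y) \<bullet> snd (g y)) v x (snd a \<bullet> snd (g x) + snd (f x) \<bullet> snd b)"
    by (intro hvd_inner hvd_snd a b)
  show ?thesis unfolding mink_def
    by (rule hvd_cong[OF hvd_diff[OF 1 2]]) (simp add: algebra_simps)
qed

lemma mink_sym: "mink x y = mink y x" by (simp add: mink_def inner_commute)
lemma mink_add_left: "mink (x + y) z = mink x z + mink y z" by (simp add: mink_def inner_add_left)
lemma mink_add_right: "mink z (x + y) = mink z x + mink z y" by (simp add: mink_def inner_add_right)
lemma mink_diff_left: "mink (x - y) z = mink x z - mink y z" by (simp add: mink_def inner_diff_left)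
lemma mink_diff_right: "mink z (x - y) = mink z x - mink z y" by (simp add: mink_def inner_diff_right)
lemma mink_minus_left: "mink (- x) z = - mink x z" by (simp add: mink_def)
lemma mink_minus_right: "mink z (- x) = - mink z x" by (simp add: mink_def)
lemma mink_scaleR_left: "mink (c *\<^sub>R x) z = c * mink x z" by (simp add: mink_def algebra_simps)
lemma mink_scaleR_right: "mink z (c *\<^sub>R x) = c * mink z x" by (simp add: mink_def algebra_simps)
lemma mink_zero_left: "mink 0 z = 0" by (simp add: mink_def)
lemma mink_zero_right: "mink z 0 = 0" by (simp add: mink_def)
lemma mink_sum_left: "mink (\<Sum>k\<in>K. f k) z = (\<Sum>k\<in>K. mink (f k) z)"
  by (induction K rule: infinite_finite_induct) (auto simp: mink_zero_left mink_add_left)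
lemma mink_sum_right: "mink z (\<Sum>k\<in>K. f k) = (\<Sum>k\<in>K. mink z (f k))"
  by (induction K rule: infinite_finite_induct) (auto simp: mink_zero_right mink_add_right)

lemmas mink_simps = mink_add_left mink_add_right mink_diff_left mink_diff_right mink_minus_left
  mink_minus_right mink_scaleR_left mink_scaleR_right mink_zero_left mink_zero_right
  mink_sum_left mink_sum_right

lemma line_open:
  fixes x v :: "'a::real_normed_vector"
  assumes "open S" shows "open {s::real. x + s *\<^sub>R v \<in> S}"
proof -
  have "continuous_on UNIV (\<lambda>s::real. x + s *\<^sub>R v)" by (intro continuous_intros)
  then have "open (UNIV \<inter> (\<lambda>s::real. x + s *\<^sub>R v) -` S)"
    by (rule continuous_open_preimage) (auto simp: assms(1))
  then show ?thesis by (simp add: vimage_def)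
qed

lemma hvd_local:
  assumes "open S" "x \<in> S" "\<And>y. y \<in> S \<Longrightarrow> f y = g y" "hvd f v x d"
  shows "hvd g v x d"
proof -
  let ?T = "{s::real. x + s *\<^sub>R v \<in> S}"
  have o: "open ?T" by (rule line_open[OF assms(1)])
  have z: "0 \<in> ?T" using assms(2) by simp
  have h: "((\<lambda>s. f (x + s *\<^sub>R v)) has_vector_derivative d) (at 0)" using assms(4) by (simp add: hvd_def)
  have "((\<lambda>s. g (x + s *\<^sub>R v)) has_vector_derivative d) (at 0)"
    by (rule has_vector_derivative_transform_within_open[OF h o z]) (simp add: assms(3))
  then show ?thesis by (simp add: hvd_def)
qed

lemma pd_local:
  assumes "open S" "x \<in> S" "\<And>y. y \<in> S \<Longrightarrow> f y = g y"
  shows "pd f v x = pd g v x"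
proof -
  let ?T = "{s::real. x + s *\<^sub>R v \<in> S}"
  have o: "open ?T" by (rule line_open[OF assms(1)])
  have z: "0 \<in> ?T" using assms(2) by simp
  have ev: "eventually (\<lambda>s. s \<in> UNIV \<longrightarrow> f (x + s *\<^sub>R v) = g (x + s *\<^sub>R v)) (nhds 0)"
    unfolding eventually_nhds by (rule exI[of _ ?T]) (simp add: o z assms(2,3))
  show ?thesis unfolding pd_def
    by (rule vector_derivative_cong_eq[OF ev]) (auto simp: assms(2))
qed

lemma ldiff_local:
  assumes "open S" "x \<in> S" "\<And>y. y \<in> S \<Longrightarrow> f y = g y" "ldiff f v x"
  shows "ldiff g v x"
  using hvd_local[OF assms(1-3) ldiff_hvd[OF assms(4)]] hvd_ldiff by blast

lemma hvd_shift:
  assumes "hvd f v (x + s0 *\<^sub>R v) d"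
  shows "((\<lambda>s. f (x + s *\<^sub>R v)) has_vector_derivative d) (at s0)"
proof -
  have 1: "((\<lambda>s. f ((x + s0 *\<^sub>R v) + s *\<^sub>R v)) has_vector_derivative d) (at (s0 - s0))"
    using assms by (simp add: hvd_def)
  have 2: "((\<lambda>s. s - s0) has_vector_derivative 1) (at s0)"
    by (auto intro!: derivative_eq_intros simp: has_vector_derivative_def)
  have "((\<lambda>s. f ((x + s0 *\<^sub>R v) + (s - s0) *\<^sub>R v)) has_vector_derivative 1 *\<^sub>R d) (at s0)"
    using vector_diff_chain_at[OF 2 1] by (simp add: o_def)
  moreover have "(\<lambda>s. f ((x + s0 *\<^sub>R v) + (s - s0) *\<^sub>R v)) = (\<lambda>s. f (x + s *\<^sub>R v))"
    by (rule ext) (simp add: algebra_simps)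
  ultimately show ?thesis by simp
qed

lemma hvd_scale_dir:
  assumes "hvd f v x d"
  shows "hvd f (c *\<^sub>R v) x (c *\<^sub>R d)"
proof -
  have 2: "((\<lambda>s. c * s) has_vector_derivative c) (at 0)"
    by (auto intro!: derivative_eq_intros simp: has_vector_derivative_def)
  have 1: "((\<lambda>s. f (x + s *\<^sub>R v)) has_vector_derivative d) (at (c * 0))"
    using assms by (simp add: hvd_def)
  show ?thesis using vector_diff_chain_at[OF 2 1] by (simp add: hvd_def o_def mult.commute)
qed


inductive Rc :: "'a::real_normed_vector set \<Rightarrow> ('a \<Rightarrow> real) set \<Rightarrow> ('a \<Rightarrow> real) \<Rightarrow> bool" for S G where
  gen: "g \<in> G \<Longrightarrow> Rc S G g"
| const: "Rc S G (\<lambda>y. c)"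
| add: "Rc S G f \<Longrightarrow> Rc S G g \<Longrightarrow> Rc S G (\<lambda>y. f y + g y)"
| mult: "Rc S G f \<Longrightarrow> Rc S G g \<Longrightarrow> Rc S G (\<lambda>y. f y * g y)"
| expo: "Rc S G f \<Longrightarrow> Rc S G (\<lambda>y. exp (f y))"
| inv: "Rc S G f \<Longrightarrow> (\<forall>y\<in>S. f y \<noteq> 0) \<Longrightarrow> Rc S G (\<lambda>y. inverse (f y))"
| cong: "Rc S G f \<Longrightarrow> (\<forall>y\<in>S. f y = g y) \<Longrightarrow> Rc S G g"

definition RP :: "'a::real_normed_vector set \<Rightarrow> ('a \<Rightarrow> real) set \<Rightarrow> ('a \<Rightarrow> real) \<Rightarrow> bool" where
  "RP S G f \<longleftrightarrow> continuous_on S f \<and> (\<forall>y\<in>S. \<forall>v. ldiff f v y) \<and>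
     (\<forall>v. \<exists>g. Rc S G g \<and> (\<forall>y\<in>S. pd f v y = g y))"

lemma hvd_of: "ldiff f v y \<Longrightarrow> pd f v y = d \<Longrightarrow> hvd f v y d"
  using ldiff_hvd by blast

lemma RP_hvd: "RP S G f \<Longrightarrow> y \<in> S \<Longrightarrow> \<forall>y\<in>S. pd f v y = f' y \<Longrightarrow> hvd f v y (f' y)"
  unfolding RP_def by (auto intro: hvd_of)

lemma Rc_RP:
  assumes S: "open S" and G: "\<forall>g\<in>G. RP S G g" and R: "Rc S G f"
  shows "RP S G f"
  using R
proof (induction rule: Rc.induct)
  case (gen g) then show ?case using G by blast
next
  case (const c)
  have "\<And>y v. hvd (\<lambda>y. c) v y 0" by (rule hvd_const)
  then show ?case unfolding RP_def
    by (auto intro!: exI[of _ "\<lambda>y. 0"] Rc.const hvd_ldiff hvd_pd)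
next
  case (add f g)
  show ?case unfolding RP_def
  proof (intro conjI ballI allI)
    show "continuous_on S (\<lambda>y. f y + g y)" using add.IH unfolding RP_def by (intro continuous_on_add) auto
  next
    fix y v assume y: "y \<in> S"
    show "ldiff (\<lambda>y. f y + g y) v y"
    proof -
      have "ldiff f v y" "ldiff g v y" using add.IH y unfolding RP_def by auto
      then show ?thesis using hvd_ldiff[OF hvd_add[OF ldiff_hvd ldiff_hvd]] by blast
    qed
  next
    fix v
    obtain f' g' where f': "Rc S G f'" "\<forall>y\<in>S. pd f v y = f' y" and g': "Rc S G g'" "\<forall>y\<in>S. pd g v y = g' y"
      using add.IH unfolding RP_def by blast
    have "\<forall>y\<in>S. pd (\<lambda>y. f y + g y) v y = f' y + g' y"
      using RP_hvd[OF add.IH(1) _ f'(2)] RP_hvd[OF add.IH(2) _ g'(2)] by (auto intro!: hvd_pd hvd_add)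
    moreover have "Rc S G (\<lambda>y. f' y + g' y)" by (intro Rc.add f'(1) g'(1))
    ultimately show "\<exists>h. Rc S G h \<and> (\<forall>y\<in>S. pd (\<lambda>y. f y + g y) v y = h y)"
      by (intro exI[of _ "\<lambda>y. f' y + g' y"]) simp
  qed
next
  case (mult f g)
  show ?case unfolding RP_def
  proof (intro conjI ballI allI)
    show "continuous_on S (\<lambda>y. f y * g y)" using mult.IH unfolding RP_def by (intro continuous_on_mult) auto
  next
    fix y v assume y: "y \<in> S"
    show "ldiff (\<lambda>y. f y * g y) v y"
    proof -
      have "ldiff f v y" "ldiff g v y" using mult.IH y unfolding RP_def by auto
      then show ?thesis using hvd_ldiff[OF hvd_mult[OF ldiff_hvd ldiff_hvd]] by blast
    qed
  next
    fix v
    obtain f' g' where f': "Rc S G f'" "\<forall>y\<in>S. pd f v y = f' y" and g': "Rc S G g'" "\<forall>y\<in>S. pd g v y = g' y"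
      using mult.IH unfolding RP_def by blast
    have "\<forall>y\<in>S. pd (\<lambda>y. f y * g y) v y = f' y * g y + f y * g' y"
      using RP_hvd[OF mult.IH(1) _ f'(2)] RP_hvd[OF mult.IH(2) _ g'(2)] by (auto intro!: hvd_pd hvd_mult)
    moreover have "Rc S G (\<lambda>y. f' y * g y + f y * g' y)" by (intro Rc.add Rc.mult f'(1) g'(1) mult.hyps)
    ultimately show "\<exists>h. Rc S G h \<and> (\<forall>y\<in>S. pd (\<lambda>y. f y * g y) v y = h y)"
      by (intro exI[of _ "\<lambda>y. f' y * g y + f y * g' y"]) simp
  qed
next
  case (expo f)
  show ?case unfolding RP_def
  proof (intro conjI ballI allI)
    show "continuous_on S (\<lambda>y. exp (f y))" using expo.IH unfolding RP_def by (intro continuous_on_exp) auto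
  next
    fix y v assume y: "y \<in> S"
    show "ldiff (\<lambda>y. exp (f y)) v y"
    proof -
      have "ldiff f v y" using expo.IH y unfolding RP_def by auto
      then show ?thesis using hvd_ldiff[OF hvd_exp[OF ldiff_hvd]] by blast
    qed
  next
    fix v
    obtain f' where f': "Rc S G f'" "\<forall>y\<in>S. pd f v y = f' y"
      using expo.IH unfolding RP_def by blast
    have "\<forall>y\<in>S. pd (\<lambda>y. exp (f y)) v y = exp (f y) * f' y"
      using RP_hvd[OF expo.IH _ f'(2)] by (auto intro!: hvd_pd hvd_exp)
    moreover have "Rc S G (\<lambda>y. exp (f y) * f' y)" by (intro Rc.mult Rc.expo f'(1) expo.hyps)
    ultimately show "\<exists>h. Rc S G h \<and> (\<forall>y\<in>S. pd (\<lambda>y. exp (f y)) v y = h y)"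
      by (intro exI[of _ "\<lambda>y. exp (f y) * f' y"]) simp
  qed
next
  case (inv f)
  show ?case unfolding RP_def
  proof (intro conjI ballI allI)
    show "continuous_on S (\<lambda>y. inverse (f y))" using inv.IH inv.hyps unfolding RP_def by (intro continuous_on_inverse) auto
  next
    fix y v assume y: "y \<in> S"
    show "ldiff (\<lambda>y. inverse (f y)) v y"
    proof -
      have "ldiff f v y" using inv.IH y unfolding RP_def by auto
      then show ?thesis using hvd_ldiff[OF hvd_inverse[OF ldiff_hvd]] inv.hyps y by blast
    qed
  next
    fix v
    obtain f' where f': "Rc S G f'" "\<forall>y\<in>S. pd f v y = f' y"
      using inv.IH unfolding RP_def by blast
    have "\<forall>y\<in>S. pd (\<lambda>y. inverse (f y)) v y = (\<lambda>y. (-1) * (inverse (f y) * inverse (f y)) * f' y) y"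
      using RP_hvd[OF inv.IH _ f'(2)] inv.hyps by (auto intro!: hvd_pd hvd_cong[OF hvd_inverse] simp: power2_eq_square)
    moreover have "Rc S G (\<lambda>y. (-1) * (inverse (f y) * inverse (f y)) * f' y)"
      using f' inv.hyps by (intro Rc.mult Rc.const Rc.inv) auto
    ultimately show "\<exists>h. Rc S G h \<and> (\<forall>y\<in>S. pd (\<lambda>y. inverse (f y)) v y = h y)"
      by (intro exI[of _ "\<lambda>y. (-1) * (inverse (f y) * inverse (f y)) * f' y"]) simp
  qed
next
  case (cong f g)
  show ?case unfolding RP_def
  proof (intro conjI ballI allI)
    show "continuous_on S g" using cong.IH cong.hyps unfolding RP_def by (auto intro: continuous_on_eq[of S f g])
  next
    fix y v assume y: "y \<in> S"
    show "ldiff g v y"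
      using cong.IH cong.hyps y S unfolding RP_def by (auto intro: ldiff_local[of S y f g])
  next
    fix v
    obtain f' where f': "Rc S G f'" "\<forall>y\<in>S. pd f v y = f' y"
      using cong.IH unfolding RP_def by blast
    have "\<forall>y\<in>S. pd g v y = f' y"
      using f' cong.hyps S pd_local[of S _ f g v] by auto
    then show "\<exists>h. Rc S G h \<and> (\<forall>y\<in>S. pd g v y = h y)" using f' by (intro exI[of _ f']) simp
  qed
qed

lemma Rc_iterpd:
  assumes S: "open S" and G: "\<forall>g\<in>G. RP S G g" and R: "Rc S G f"
  shows "\<exists>g. Rc S G g \<and> (\<forall>y\<in>S. iterpd f vs y = g y)"
proof (induction vs)
  case Nil then show ?case using R by auto
next
  case (Cons v vs)
  then obtain g where g: "Rc S G g" "\<forall>y\<in>S. iterpd f vs y = g y" by blast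
  obtain h where h: "Rc S G h" "\<forall>y\<in>S. pd g v y = h y"
    using Rc_RP[OF S G g(1)] unfolding RP_def by blast
  have "\<forall>y\<in>S. iterpd f (v # vs) y = h y"
  proof
    fix y assume y: "y \<in> S"
    have "pd (iterpd f vs) v y = pd g v y" by (rule pd_local[OF S y]) (simp add: g(2))
    then show "iterpd f (v # vs) y = h y" using h(2) y by simp
  qed
  then show ?case using h(1) by blast
qed

lemma Rc_smooth:
  fixes S :: "'a::euclidean_space set"
  assumes S: "open S" and G: "\<forall>g\<in>G. RP S G g" and R: "Rc S G f"
  shows "smooth_on S f"
  unfolding smooth_on_def
proof (intro conjI allI ballI)
  show "open S" by fact
next
  fix vs
  obtain g where g: "Rc S G g" "\<forall>y\<in>S. iterpd f vs y = g y" using Rc_iterpd[OF S G R] by blast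
  have "RP S G g" by (rule Rc_RP[OF S G g(1)])
  then show "continuous_on S (iterpd f vs)"
    using g(2) unfolding RP_def by (auto intro: continuous_on_eq[of S g])
  fix x v assume x: "x \<in> S"
  have "ldiff g v x" using \<open>RP S G g\<close> x unfolding RP_def by blast
  then have "ldiff (iterpd f vs) v x"
    by (rule ldiff_local[OF S x, rotated]) (simp add: g(2))
  then show "(\<lambda>s. iterpd f vs (x + s *\<^sub>R v)) differentiable at 0" by (simp add: ldiff_def)
qed

lemma Rc_RP_all:
  assumes S: "open S" and G: "\<forall>g\<in>G. RP S G g" and R: "Rc S G f" and y: "y \<in> S"
  shows "ldiff f v y"
  using Rc_RP[OF S G R] y unfolding RP_def by blast

lemma Rc_pd:
  assumes S: "open S" and G: "\<forall>g\<in>G. RP S G g" and R: "Rc S G f"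
  shows "Rc S G (pd f v)"
proof -
  obtain g where "Rc S G g" "\<forall>y\<in>S. pd f v y = g y" using Rc_RP[OF S G R] unfolding RP_def by blast
  then show ?thesis using Rc.cong[of S G g "pd f v"] by simp
qed

lemma Rc_sum: "finite K \<Longrightarrow> (\<And>k. k \<in> K \<Longrightarrow> Rc S G (f k)) \<Longrightarrow> Rc S G (\<lambda>y. \<Sum>k\<in>K. f k y)"
  by (induction K rule: finite_induct) (auto intro: Rc.const Rc.add)

lemma Rc_prod: "finite K \<Longrightarrow> (\<And>k. k \<in> K \<Longrightarrow> Rc S G (f k)) \<Longrightarrow> Rc S G (\<lambda>y. \<Prod>k\<in>K. f k y)"
  by (induction K rule: finite_induct) (auto intro: Rc.const Rc.mult)

lemma Rc_neg: "Rc S G f \<Longrightarrow> Rc S G (\<lambda>y. - f y)"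
  using Rc.mult[OF Rc.const[of S G "-1"], of f] by (auto intro: Rc.cong)

lemma Rc_diff: "Rc S G f \<Longrightarrow> Rc S G g \<Longrightarrow> Rc S G (\<lambda>y. f y - g y)"
  using Rc.add[OF _ Rc_neg[of S G g], of f] by simp

lemma Rc_div: "Rc S G f \<Longrightarrow> Rc S G g \<Longrightarrow> (\<forall>y\<in>S. g y \<noteq> 0) \<Longrightarrow> Rc S G (\<lambda>y. f y / g y)"
  using Rc.mult[OF _ Rc.inv[of S G g], of f] by (simp add: divide_inverse)

lemma Rc_power2: "Rc S G f \<Longrightarrow> Rc S G (\<lambda>y. (f y)\<^sup>2)"
  using Rc.mult[of S G f f] by (simp add: power2_eq_square)


lemma hvd_real: "hvd (F::'a::real_normed_vector \<Rightarrow> real) v y d \<longleftrightarrow> ((\<lambda>s. F (y + s *\<^sub>R v)) has_real_derivative d) (at 0)"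
  by (simp add: hvd_def has_real_derivative_iff_has_vector_derivative)

lemma mvt_bound:
  fixes g g' :: "real \<Rightarrow> real"
  assumes d: "\<And>\<tau>. \<tau> \<in> closed_segment 0 s \<Longrightarrow> (g has_real_derivative g' \<tau>) (at \<tau>)"
    and b: "\<And>\<tau>. \<tau> \<in> closed_segment 0 s \<Longrightarrow> \<bar>g' \<tau> - c\<bar> \<le> e"
  shows "\<bar>g s - g 0 - s * c\<bar> \<le> \<bar>s\<bar> * e"
proof (cases "s = 0")
  case True then show ?thesis by simp
next
  case False
  define h where "h \<tau> = g \<tau> - \<tau> * c" for \<tau>
  have dh: "\<And>\<tau>. \<tau> \<in> closed_segment 0 s \<Longrightarrow> (h has_real_derivative (g' \<tau> - c)) (at \<tau>)"
    unfolding h_def by (auto intro!: derivative_eq_intros d)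
  have "\<exists>z. z \<in> closed_segment 0 s \<and> g s - g 0 - s * c = s * (g' z - c)"
  proof (cases "s > 0")
    case True
    obtain z where z: "0 < z" "z < s" "h s - h 0 = (s - 0) * (g' z - c)"
      using MVT2[OF True, of h "\<lambda>\<tau>. g' \<tau> - c"] dh True by (auto simp: closed_segment_eq_real_ivl)
    show ?thesis by (rule exI[of _ z]) (use z True in \<open>auto simp: closed_segment_eq_real_ivl h_def algebra_simps\<close>)
  next
    case False
    then have s: "s < 0" using \<open>s \<noteq> 0\<close> by simp
    obtain z where z: "s < z" "z < 0" "h 0 - h s = (0 - s) * (g' z - c)"
      using MVT2[OF s, of h "\<lambda>\<tau>. g' \<tau> - c"] dh s by (auto simp: closed_segment_eq_real_ivl)
    show ?thesis by (rule exI[of _ z]) (use z s in \<open>auto simp: closed_segment_eq_real_ivl h_def algebra_simps\<close>)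
  qed
  then obtain z where z: "z \<in> closed_segment 0 s" "g s - g 0 - s * c = s * (g' z - c)" by blast
  have "\<bar>g s - g 0 - s * c\<bar> = \<bar>s\<bar> * \<bar>g' z - c\<bar>" by (simp add: z(2) abs_mult)
  also have "\<dots> \<le> \<bar>s\<bar> * e" by (rule mult_left_mono[OF b[OF z(1)]]) simp
  finally show ?thesis .
qed

lemma deriv_bound:
  fixes g :: "real \<Rightarrow> real"
  assumes g: "(g has_real_derivative d) (at 0)" and g0: "g 0 = 0" and dp: "\<delta> > 0"
    and b: "\<And>t. 0 < \<bar>t\<bar> \<Longrightarrow> \<bar>t\<bar> < \<delta> \<Longrightarrow> \<bar>g t - t * c\<bar> \<le> K * \<bar>t\<bar>"
  shows "\<bar>d - c\<bar> \<le> K"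
proof -
  have "((\<lambda>t. (g t - g 0) / (t - 0)) \<longlongrightarrow> d) (at 0)" using g has_field_derivative_iff by blast
  then have "((\<lambda>t. \<bar>g t / t - c\<bar>) \<longlongrightarrow> \<bar>d - c\<bar>) (at 0)"
    using g0 by (auto intro!: tendsto_intros)
  moreover have key: "\<bar>g t / t - c\<bar> \<le> K" if t: "t \<noteq> 0" "\<bar>t\<bar> < \<delta>" for t
  proof -
    have "\<bar>g t - t * c\<bar> \<le> K * \<bar>t\<bar>" using b t by simp
    moreover have "g t / t - c = (g t - t * c) / t" using t by (simp add: field_simps)
    ultimately show "\<bar>g t / t - c\<bar> \<le> K" using t by (simp add: abs_divide pos_divide_le_eq)
  qed
  have "eventually (\<lambda>t. \<bar>g t / t - c\<bar> \<le> K) (at 0)"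
    unfolding eventually_at using dp key by (intro exI[of _ \<delta>]) (auto simp: dist_real_def)
  ultimately show ?thesis by (intro tendsto_upperbound) auto
qed

lemma lim_from_bound:
  fixes q :: "real \<Rightarrow> real"
  assumes "\<And>\<epsilon>. \<epsilon> > 0 \<Longrightarrow> \<exists>\<delta>>0. \<forall>s. 0 < \<bar>s\<bar> \<and> \<bar>s\<bar> < \<delta> \<longrightarrow> \<bar>q s - L\<bar> \<le> \<epsilon>"
  shows "(q \<longlongrightarrow> L) (at 0)"
  unfolding LIM_eq
proof (intro allI impI)
  fix r :: real assume r: "r > 0"
  obtain \<delta> where "\<delta> > 0" "\<forall>s. 0 < \<bar>s\<bar> \<and> \<bar>s\<bar> < \<delta> \<longrightarrow> \<bar>q s - L\<bar> \<le> r / 2"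
    using assms[of "r/2"] r by auto
  then show "\<exists>s>0. \<forall>x. x \<noteq> 0 \<and> norm (x - 0) < s \<longrightarrow> norm (q x - L) < r"
    using r by (intro exI[of _ \<delta>]) force
qed

lemma smooth_on_open: "smooth_on S F \<Longrightarrow> open S" by (simp add: smooth_on_def)

lemma smooth_ldiff: "smooth_on S F \<Longrightarrow> y \<in> S \<Longrightarrow> ldiff (iterpd F vs) v y"
  by (simp add: smooth_on_def ldiff_def)

lemma smooth_ldiff0: "smooth_on S F \<Longrightarrow> y \<in> S \<Longrightarrow> ldiff F v y"
  using smooth_ldiff[of S F y "[]"] by simp

lemma smooth_cont: "smooth_on S F \<Longrightarrow> continuous_on S (iterpd F vs)"
  by (simp add: smooth_on_def)

lemma smooth_hvd: "smooth_on S F \<Longrightarrow> y \<in> S \<Longrightarrow> hvd (iterpd F vs) v y (iterpd F (v # vs) y)"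
  using ldiff_hvd[OF smooth_ldiff] by simp

lemma smooth_hvd0: "smooth_on S F \<Longrightarrow> y \<in> S \<Longrightarrow> hvd F v y (pd F v y)"
  using smooth_hvd[of S F y "[]"] by simp

lemma cont_ball:
  fixes f :: "'a::metric_space \<Rightarrow> real"
  assumes "continuous_on S f" "open S" "y \<in> S" "\<epsilon> > 0"
  shows "\<exists>\<delta>>0. \<forall>p. dist p y < \<delta> \<longrightarrow> p \<in> S \<and> \<bar>f p - f y\<bar> \<le> \<epsilon>"
proof -
  obtain d1 where d1: "d1 > 0" "\<forall>p\<in>S. dist p y < d1 \<longrightarrow> dist (f p) (f y) < \<epsilon>"
    using assms(1,3,4) unfolding continuous_on_iff by blast
  obtain d2 where d2: "d2 > 0" "ball y d2 \<subseteq> S" using assms(2,3) openE by blast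
  show ?thesis
    using d1 d2 by (intro exI[of _ "min d1 d2"]) (auto simp: dist_real_def dist_commute subset_iff less_imp_le)
qed

lemma seg_bound:
  fixes v w :: "'a::real_normed_vector"
  assumes "\<tau> \<in> closed_segment 0 t" "\<bar>s\<bar> < r / (norm v + norm w + 1)" "\<bar>t\<bar> < r / (norm v + norm w + 1)"
  shows "dist (y + s *\<^sub>R v + \<tau> *\<^sub>R w) y < r"
proof -
  have tau: "\<bar>\<tau>\<bar> \<le> \<bar>t\<bar>" using assms(1) by (auto simp: closed_segment_eq_real_ivl split: if_splits)
  let ?M = "r / (norm v + norm w + 1)"
  have "dist (y + s *\<^sub>R v + \<tau> *\<^sub>R w) y = norm (s *\<^sub>R v + \<tau> *\<^sub>R w)" by (simp add: dist_norm)
  also have "\<dots> \<le> \<bar>s\<bar> * norm v + \<bar>\<tau>\<bar> * norm w" using norm_triangle_ineq[of "s *\<^sub>R v" "\<tau> *\<^sub>R w"] by simp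
  also have "\<dots> \<le> ?M * norm v + ?M * norm w"
    using assms tau by (intro add_mono mult_right_mono) auto
  also have "\<dots> < ?M * (norm v + norm w + 1)"
  proof -
    have "?M > 0" using assms(2) by linarith
    moreover have "?M * norm v + ?M * norm w + ?M = ?M * (norm v + norm w + 1)" by (simp only: ring_distribs mult_1_right)
    ultimately show ?thesis by linarith
  qed
  also have "\<dots> = r"
  proof -
    have "norm v + norm w + 1 > 0" using norm_ge_zero[of v] norm_ge_zero[of w] by linarith
    then show ?thesis by simp
  qed
  finally show ?thesis .
qed

lemma pd_add_dir:
  fixes F :: "'a::euclidean_space \<Rightarrow> real"
  assumes sm: "smooth_on S F" and y: "y \<in> S"
  shows "hvd F (v + w) y (pd F v y + pd F w y)"
proof -
  have S: "open S" using sm by (rule smooth_on_open)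
  let ?a = "pd F v y" and ?b = "pd F w y"
  have ha: "((\<lambda>s. F (y + s *\<^sub>R v)) has_real_derivative ?a) (at 0)"
    using smooth_hvd0[OF sm y] by (simp add: hvd_real)
  have lim2: "((\<lambda>s. (F (y + s *\<^sub>R v) - F y) / s) \<longlongrightarrow> ?a) (at 0)"
    using ha unfolding has_field_derivative_iff by simp
  have lim1: "((\<lambda>s. (F (y + s *\<^sub>R v + s *\<^sub>R w) - F (y + s *\<^sub>R v)) / s) \<longlongrightarrow> ?b) (at 0)"
  proof (rule lim_from_bound)
    fix \<epsilon> :: real assume e: "\<epsilon> > 0"
    have cw: "continuous_on S (pd F w)" using smooth_cont[OF sm, of "[w]"] by simp
    obtain \<delta>0 where d0: "\<delta>0 > 0" "\<forall>p. dist p y < \<delta>0 \<longrightarrow> p \<in> S \<and> \<bar>pd F w p - ?b\<bar> \<le> \<epsilon>"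
      using cont_ball[OF cw S y e] by blast
    define \<delta> where "\<delta> = \<delta>0 / (norm v + norm w + 1)"
    have "norm v + norm w + 1 > 0" using norm_ge_zero[of v] norm_ge_zero[of w] by linarith
    then have dp: "\<delta> > 0" unfolding \<delta>_def by (rule divide_pos_pos[OF d0(1)])
    show "\<exists>\<delta>>0. \<forall>s. 0 < \<bar>s\<bar> \<and> \<bar>s\<bar> < \<delta> \<longrightarrow> \<bar>(F (y + s *\<^sub>R v + s *\<^sub>R w) - F (y + s *\<^sub>R v)) / s - ?b\<bar> \<le> \<epsilon>"
    proof (intro exI[of _ \<delta>] conjI allI impI)
      fix s :: real assume s: "0 < \<bar>s\<bar> \<and> \<bar>s\<bar> < \<delta>"
      have pts: "dist (y + s *\<^sub>R v + \<tau> *\<^sub>R w) y < \<delta>0" if "\<tau> \<in> closed_segment 0 s" for \<tau>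
        using seg_bound[OF that, where s=s and r=\<delta>0 and v=v and w=w and y=y] s unfolding \<delta>_def by auto
      have der: "((\<lambda>t. F (y + s *\<^sub>R v + t *\<^sub>R w)) has_real_derivative pd F w (y + s *\<^sub>R v + \<tau> *\<^sub>R w)) (at \<tau>)"
        if "\<tau> \<in> closed_segment 0 s" for \<tau>
      proof -
        have "y + s *\<^sub>R v + \<tau> *\<^sub>R w \<in> S" using pts[OF that] d0 by blast
        then have "hvd F w (y + s *\<^sub>R v + \<tau> *\<^sub>R w) (pd F w (y + s *\<^sub>R v + \<tau> *\<^sub>R w))"
          by (rule smooth_hvd0[OF sm])
        then show ?thesis using hvd_shift[of F w "y + s *\<^sub>R v" \<tau>]
          by (simp add: has_real_derivative_iff_has_vector_derivative)
      qed
      have "\<bar>F (y + s *\<^sub>R v + s *\<^sub>R w) - F (y + s *\<^sub>R v + 0 *\<^sub>R w) - s * ?b\<bar> \<le> \<bar>s\<bar> * \<epsilon>"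
        by (rule mvt_bound[OF der]) (use pts d0 in auto)
      then have "\<bar>F (y + s *\<^sub>R v + s *\<^sub>R w) - F (y + s *\<^sub>R v) - s * ?b\<bar> \<le> \<bar>s\<bar> * \<epsilon>" by simp
      moreover have "(F (y + s *\<^sub>R v + s *\<^sub>R w) - F (y + s *\<^sub>R v)) / s - ?b
          = (F (y + s *\<^sub>R v + s *\<^sub>R w) - F (y + s *\<^sub>R v) - s * ?b) / s"
        using s by (simp add: field_simps)
      ultimately show "\<bar>(F (y + s *\<^sub>R v + s *\<^sub>R w) - F (y + s *\<^sub>R v)) / s - ?b\<bar> \<le> \<epsilon>"
        using s by (simp add: abs_divide pos_divide_le_eq mult.commute)
    qed (fact dp)
  qed
  have eq: "(\<lambda>s. (F (y + s *\<^sub>R (v + w)) - F y) / s) =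
      (\<lambda>s. (F (y + s *\<^sub>R v + s *\<^sub>R w) - F (y + s *\<^sub>R v)) / s + (F (y + s *\<^sub>R v) - F y) / s)"
    by (rule ext) (simp add: scaleR_right_distrib add.assoc diff_divide_distrib)
  have "((\<lambda>s. (F (y + s *\<^sub>R (v + w)) - F y) / s) \<longlongrightarrow> ?b + ?a) (at 0)"
    unfolding eq by (rule tendsto_add[OF lim1 lim2])
  then have "((\<lambda>s. F (y + s *\<^sub>R (v + w))) has_real_derivative ?a + ?b) (at 0)"
    unfolding has_field_derivative_iff by (simp add: add.commute)
  then show ?thesis by (simp add: hvd_real)
qed

lemma pd_add_dir_eq:
  fixes F :: "'a::euclidean_space \<Rightarrow> real"
  shows "smooth_on S F \<Longrightarrow> y \<in> S \<Longrightarrow> pd F (v + w) y = pd F v y + pd F w y"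
  using pd_add_dir hvd_pd by blast

lemma pd_scale_dir_eq:
  fixes F :: "'a::euclidean_space \<Rightarrow> 'b::real_normed_vector"
  shows "ldiff F v y \<Longrightarrow> pd F (c *\<^sub>R v) y = c *\<^sub>R pd F v y"
  using hvd_pd[OF hvd_scale_dir[OF ldiff_hvd]] by blast

lemma pd_zero_dir: "pd F 0 y = 0"
  by (simp add: pd_def vector_derivative_const_at)

lemma pd_sum_dir:
  fixes F :: "'a::euclidean_space \<Rightarrow> real"
  assumes "smooth_on S F" "y \<in> S" "finite K"
  shows "pd F (\<Sum>k\<in>K. c k *\<^sub>R u k) y = (\<Sum>k\<in>K. c k * pd F (u k) y)"
  using assms(3)
proof (induction K rule: finite_induct)
  case empty then show ?case by (simp add: pd_zero_dir)
next
  case (insert k K)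
  then show ?case
    using pd_add_dir_eq[OF assms(1,2)] pd_scale_dir_eq[OF smooth_ldiff0[OF assms(1,2)]] by simp
qed


lemma seg_bound':
  fixes v w :: "'a::real_normed_vector"
  assumes "\<tau> \<in> closed_segment 0 t" "\<bar>s\<bar> < r / (norm w + norm v + 1)" "\<bar>t\<bar> < r / (norm w + norm v + 1)"
  shows "dist (y + s *\<^sub>R v + \<tau> *\<^sub>R w) y < r"
  using seg_bound[OF assms(1), of s r v w y] assms(2,3) by (simp add: add.commute)

lemma seg_le: "\<tau> \<in> closed_segment 0 (t::real) \<Longrightarrow> \<bar>\<tau>\<bar> \<le> \<bar>t\<bar>"
  by (auto simp: closed_segment_eq_real_ivl split: if_splits)

lemma eq_by_eps: "(\<And>\<epsilon>. \<epsilon> > 0 \<Longrightarrow> \<bar>a - b\<bar> \<le> \<epsilon>) \<Longrightarrow> (a::real) = b"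
  by (metis abs_le_zero_iff dense_ge eq_iff_diff_eq_0 not_less)

lemma schwarz:
  fixes F :: "'a::euclidean_space \<Rightarrow> real"
  assumes sm: "smooth_on S F" and y: "y \<in> S"
  shows "pd (pd F w) v y = pd (pd F v) w y"
proof (rule eq_by_eps)
  fix \<epsilon> :: real assume e: "\<epsilon> > 0"
  have S: "open S" using sm by (rule smooth_on_open)
  let ?L = "pd (pd F v) w y"
  have cvw: "continuous_on S (pd (pd F v) w)" using smooth_cont[OF sm, of "[w, v]"] by simp
  obtain \<delta>0 where d0: "\<delta>0 > 0" "\<forall>p. dist p y < \<delta>0 \<longrightarrow> p \<in> S \<and> \<bar>pd (pd F v) w p - ?L\<bar> \<le> \<epsilon>"
    using cont_ball[OF cvw S y e] by blast
  define \<delta> where "\<delta> = \<delta>0 / (norm v + norm w + 1)"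
  have "norm v + norm w + 1 > 0" using norm_ge_zero[of v] norm_ge_zero[of w] by linarith
  then have dp: "\<delta> > 0" unfolding \<delta>_def by (rule divide_pos_pos[OF d0(1)])
  have \<delta>': "\<delta> = \<delta>0 / (norm w + norm v + 1)" unfolding \<delta>_def by (simp add: add.commute)
  define \<Delta> where "\<Delta> s t = F (y + s *\<^sub>R v + t *\<^sub>R w) - F (y + s *\<^sub>R v) - F (y + t *\<^sub>R w) + F y" for s t
  have claim: "\<bar>\<Delta> s t - s * (t * ?L)\<bar> \<le> \<bar>s\<bar> * (\<bar>t\<bar> * \<epsilon>)" if st: "\<bar>s\<bar> < \<delta>" "\<bar>t\<bar> < \<delta>" for s t
  proof -
    have inner: "\<bar>pd F v (y + \<sigma> *\<^sub>R v + t *\<^sub>R w) - pd F v (y + \<sigma> *\<^sub>R v + 0 *\<^sub>R w) - t * ?L\<bar> \<le> \<bar>t\<bar> * \<epsilon>"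
      if \<sigma>: "\<sigma> \<in> closed_segment 0 s" for \<sigma>
    proof (rule mvt_bound)
      have sig: "\<bar>\<sigma>\<bar> < \<delta>" using seg_le[OF \<sigma>] st by linarith
      fix \<tau> assume \<tau>: "\<tau> \<in> closed_segment 0 t"
      have dist: "dist (y + \<sigma> *\<^sub>R v + \<tau> *\<^sub>R w) y < \<delta>0"
        using seg_bound[OF \<tau>, where s=\<sigma> and r=\<delta>0 and v=v and w=w and y=y] sig st unfolding \<delta>_def by auto
      then have inS: "y + \<sigma> *\<^sub>R v + \<tau> *\<^sub>R w \<in> S" using d0 by blast
      have "hvd (iterpd F [v]) w (y + \<sigma> *\<^sub>R v + \<tau> *\<^sub>R w) (iterpd F [w, v] (y + \<sigma> *\<^sub>R v + \<tau> *\<^sub>R w))"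
        by (rule smooth_hvd[OF sm inS])
      then show "((\<lambda>t. pd F v (y + \<sigma> *\<^sub>R v + t *\<^sub>R w)) has_real_derivative pd (pd F v) w (y + \<sigma> *\<^sub>R v + \<tau> *\<^sub>R w)) (at \<tau>)"
        using hvd_shift[of "pd F v" w "y + \<sigma> *\<^sub>R v" \<tau>] by (simp add: has_real_derivative_iff_has_vector_derivative)
      show "\<bar>pd (pd F v) w (y + \<sigma> *\<^sub>R v + \<tau> *\<^sub>R w) - ?L\<bar> \<le> \<epsilon>" using dist d0 by blast
    qed
    have "\<bar>(F (y + t *\<^sub>R w + s *\<^sub>R v) - F (y + s *\<^sub>R v)) - (F (y + t *\<^sub>R w + 0 *\<^sub>R v) - F (y + 0 *\<^sub>R v)) - s * (t * ?L)\<bar>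
           \<le> \<bar>s\<bar> * (\<bar>t\<bar> * \<epsilon>)"
    proof (rule mvt_bound[where g="\<lambda>\<sigma>. F (y + t *\<^sub>R w + \<sigma> *\<^sub>R v) - F (y + \<sigma> *\<^sub>R v)"])
      fix \<sigma> assume \<sigma>: "\<sigma> \<in> closed_segment 0 s"
      have sig: "\<bar>\<sigma>\<bar> < \<delta>" using seg_le[OF \<sigma>] st by linarith
      have "dist (y + t *\<^sub>R w + \<sigma> *\<^sub>R v) y < \<delta>0"
        using seg_bound'[OF \<sigma>, where s=t and r=\<delta>0 and v=w and w=v and y=y] sig st unfolding \<delta>_def by auto
      then have in1: "y + t *\<^sub>R w + \<sigma> *\<^sub>R v \<in> S" using d0 by blast
      have "dist (y + 0 *\<^sub>R w + \<sigma> *\<^sub>R v) y < \<delta>0"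
        using seg_bound'[OF \<sigma>, where s=0 and r=\<delta>0 and v=w and w=v and y=y] sig st dp unfolding \<delta>_def by auto
      then have in2: "y + \<sigma> *\<^sub>R v \<in> S" using d0 by simp
      have h1: "((\<lambda>\<sigma>. F (y + t *\<^sub>R w + \<sigma> *\<^sub>R v)) has_real_derivative pd F v (y + t *\<^sub>R w + \<sigma> *\<^sub>R v)) (at \<sigma>)"
        using hvd_shift[of F v "y + t *\<^sub>R w" \<sigma>] smooth_hvd0[OF sm in1] by (simp add: has_real_derivative_iff_has_vector_derivative)
      have h2: "((\<lambda>\<sigma>. F (y + \<sigma> *\<^sub>R v)) has_real_derivative pd F v (y + \<sigma> *\<^sub>R v)) (at \<sigma>)"
        using hvd_shift[of F v "y" \<sigma>] smooth_hvd0[OF sm in2] by (simp add: has_real_derivative_iff_has_vector_derivative)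
      show "((\<lambda>\<sigma>. F (y + t *\<^sub>R w + \<sigma> *\<^sub>R v) - F (y + \<sigma> *\<^sub>R v)) has_real_derivative
          (pd F v (y + t *\<^sub>R w + \<sigma> *\<^sub>R v) - pd F v (y + \<sigma> *\<^sub>R v))) (at \<sigma>)"
        by (rule DERIV_diff[OF h1 h2])
      show "\<bar>pd F v (y + t *\<^sub>R w + \<sigma> *\<^sub>R v) - pd F v (y + \<sigma> *\<^sub>R v) - t * ?L\<bar> \<le> \<bar>t\<bar> * \<epsilon>"
        using inner[OF \<sigma>] by (simp add: algebra_simps)
    qed
    then show ?thesis unfolding \<Delta>_def by (simp add: algebra_simps)
  qed
  have step2: "\<bar>(pd F w (y + s *\<^sub>R v) - pd F w y) - s * ?L\<bar> \<le> \<bar>s\<bar> * \<epsilon>" if s: "0 < \<bar>s\<bar>" "\<bar>s\<bar> < \<delta>" for s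
  proof -
    have "y + s *\<^sub>R v \<in> S"
      using seg_bound[of 0 0 s \<delta>0 v w y] s dp d0 unfolding \<delta>_def by auto
    then have h1: "((\<lambda>t. F (y + s *\<^sub>R v + t *\<^sub>R w)) has_real_derivative pd F w (y + s *\<^sub>R v)) (at 0)"
      using smooth_hvd0[OF sm] by (simp add: hvd_real)
    have h2: "((\<lambda>t. F (y + t *\<^sub>R w)) has_real_derivative pd F w y) (at 0)"
      using smooth_hvd0[OF sm y] by (simp add: hvd_real)
    have "((\<lambda>t. \<Delta> s t) has_real_derivative (pd F w (y + s *\<^sub>R v) - 0 - pd F w y + 0)) (at 0)"
      unfolding \<Delta>_def by (intro DERIV_add DERIV_diff h1 h2 DERIV_const)
    then have dd: "((\<lambda>t. \<Delta> s t) has_real_derivative (pd F w (y + s *\<^sub>R v) - pd F w y)) (at 0)" by simp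
    have dz: "\<Delta> s 0 = 0" by (simp add: \<Delta>_def)
    show ?thesis
    proof (rule deriv_bound[OF dd dz dp])
      fix t :: real assume t: "0 < \<bar>t\<bar>" "\<bar>t\<bar> < \<delta>"
      then have "\<bar>\<Delta> s t - s * (t * ?L)\<bar> \<le> \<bar>s\<bar> * (\<bar>t\<bar> * \<epsilon>)" using claim s by simp
      then show "\<bar>\<Delta> s t - t * (s * ?L)\<bar> \<le> \<bar>s\<bar> * \<epsilon> * \<bar>t\<bar>" by (simp add: algebra_simps)
    qed
  qed
  have h3: "((\<lambda>s. pd F w (y + s *\<^sub>R v)) has_real_derivative pd (pd F w) v y) (at 0)"
    using smooth_hvd[OF sm y, of "[w]" v] by (simp add: hvd_real)
  have "((\<lambda>s. pd F w (y + s *\<^sub>R v) - pd F w y) has_real_derivative pd (pd F w) v y - 0) (at 0)"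
    by (intro DERIV_diff h3 DERIV_const)
  then have dd: "((\<lambda>s. pd F w (y + s *\<^sub>R v) - pd F w y) has_real_derivative pd (pd F w) v y) (at 0)" by simp
  show "\<bar>pd (pd F w) v y - ?L\<bar> \<le> \<epsilon>"
  proof (rule deriv_bound[OF dd _ dp])
    fix s :: real assume "0 < \<bar>s\<bar>" "\<bar>s\<bar> < \<delta>"
    then show "\<bar>pd F w (y + s *\<^sub>R v) - pd F w y - s * ?L\<bar> \<le> \<epsilon> * \<bar>s\<bar>"
      using step2 by (simp add: mult.commute)
  qed simp
qed

lemma smooth_iterpd: "smooth_on S F \<Longrightarrow> smooth_on S (iterpd F vs)"
proof -
  have it: "iterpd (iterpd F vs) ws = iterpd F (ws @ vs)" for ws by (induction ws) auto
  assume "smooth_on S F" then show ?thesis unfolding smooth_on_def it by blast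
qed

lemma smooth_comp_iter:
  assumes sm: "smooth_on S F" and l: "bounded_linear l" and y: "y \<in> S"
  shows "iterpd (\<lambda>y. l (F y)) vs y = l (iterpd F vs y)"
  using y
proof (induction vs arbitrary: y)
  case Nil then show ?case by simp
next
  case (Cons v vs)
  have S: "open S" using sm by (rule smooth_on_open)
  have "pd (iterpd (\<lambda>y. l (F y)) vs) v y = pd (\<lambda>y. l (iterpd F vs y)) v y"
    by (rule pd_local[OF S Cons.prems]) (use Cons.IH in auto)
  also have "\<dots> = l (pd (iterpd F vs) v y)"
    by (rule hvd_pd[OF hvd_linear[OF l ldiff_hvd[OF smooth_ldiff[OF sm Cons.prems]]]])
  finally show ?case by simp
qed

lemma smooth_comp:
  fixes F :: "'a::euclidean_space \<Rightarrow> 'b::real_normed_vector"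
  assumes sm: "smooth_on S F" and l: "bounded_linear l"
  shows "smooth_on S (\<lambda>y. l (F y))"
  unfolding smooth_on_def
proof (intro conjI allI ballI)
  show S: "open S" using sm by (rule smooth_on_open)
  fix vs
  have "continuous_on S (\<lambda>y. l (iterpd F vs y))"
    using smooth_cont[OF sm] l by (intro continuous_on_compose2[OF linear_continuous_on[OF l]]) auto
  then show "continuous_on S (iterpd (\<lambda>y. l (F y)) vs)"
    by (rule continuous_on_eq) (simp add: smooth_comp_iter[OF sm l])
  fix x v assume x: "x \<in> S"
  have "ldiff (\<lambda>y. l (iterpd F vs y)) v x"
    using hvd_ldiff[OF hvd_linear[OF l ldiff_hvd[OF smooth_ldiff[OF sm x]]]] .
  then have "ldiff (iterpd (\<lambda>y. l (F y)) vs) v x"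
    by (rule ldiff_local[OF S x, rotated]) (simp add: smooth_comp_iter[OF sm l])
  then show "(\<lambda>s. iterpd (\<lambda>y. l (F y)) vs (x + s *\<^sub>R v)) differentiable at 0" by (simp add: ldiff_def)
qed


definition GX :: "('n::finite par \<Rightarrow> ('n, 'm::finite) amb) \<Rightarrow> ('n par \<Rightarrow> real) set" where
  "GX X = {g. \<exists>vs i. g = (\<lambda>y. fst (iterpd X vs y) $ i)} \<union> {g. \<exists>vs i. g = (\<lambda>y. snd (iterpd X vs y) $ i)}
     \<union> {g. bounded_linear g}"

lemma bl_fst_nth: "bounded_linear (\<lambda>p::(('a::real_normed_vector)^'n) \<times> 'b::real_normed_vector. fst p $ i)"
  by (intro bounded_linear_compose[OF bounded_linear_vec_nth bounded_linear_fst])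

lemma bl_snd_nth: "bounded_linear (\<lambda>p::'b::real_normed_vector \<times> (('a::real_normed_vector)^'n). snd p $ i)"
  by (intro bounded_linear_compose[OF bounded_linear_vec_nth bounded_linear_snd])

lemma RP_comp:
  assumes sm: "smooth_on S X" and l: "bounded_linear l"
    and gen: "\<And>vs. Rc S G (\<lambda>y. l (iterpd X vs y))"
  shows "RP S G (\<lambda>y. l (iterpd X vs y))"
  unfolding RP_def
proof (intro conjI allI ballI)
  show "continuous_on S (\<lambda>y. l (iterpd X vs y))"
    using smooth_cont[OF sm] by (intro continuous_on_compose2[OF linear_continuous_on[OF l]]) auto
  fix y v assume y: "y \<in> S"
  show "ldiff (\<lambda>y. l (iterpd X vs y)) v y"
    by (rule hvd_ldiff[OF hvd_linear[OF l smooth_hvd[OF sm y]]])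
next
  fix v
  have "\<forall>y\<in>S. pd (\<lambda>y. l (iterpd X vs y)) v y = l (iterpd X (v # vs) y)"
    using hvd_pd[OF hvd_linear[OF l smooth_hvd[OF sm]]] by blast
  then show "\<exists>g. Rc S G g \<and> (\<forall>y\<in>S. pd (\<lambda>y. l (iterpd X vs y)) v y = g y)"
    using gen[of "v # vs"] by blast
qed

lemma GX_RP:
  assumes sm: "smooth_on S X"
  shows "\<forall>g\<in>GX X. RP S (GX X) g"
proof
  fix g assume g: "g \<in> GX X"
  show "RP S (GX X) g"
  proof (cases "\<exists>vs i. g = (\<lambda>y. fst (iterpd X vs y) $ i)")
    case True
    then obtain vs i where gi: "g = (\<lambda>y. fst (iterpd X vs y) $ i)" by blast
    have "\<And>vs. Rc S (GX X) (\<lambda>y. fst (iterpd X vs y) $ i)" by (rule Rc.gen) (auto simp: GX_def)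
    then show ?thesis unfolding gi using RP_comp[OF sm bl_fst_nth] by blast
  next
    case F1: False
    show ?thesis
    proof (cases "\<exists>vs i. g = (\<lambda>y. snd (iterpd X vs y) $ i)")
      case True
      then obtain vs i where gi: "g = (\<lambda>y. snd (iterpd X vs y) $ i)" by blast
      have "\<And>vs. Rc S (GX X) (\<lambda>y. snd (iterpd X vs y) $ i)" by (rule Rc.gen) (auto simp: GX_def)
      then show ?thesis unfolding gi using RP_comp[OF sm bl_snd_nth] by blast
    next
      case False
      then have bl: "bounded_linear g" using F1 g by (auto simp: GX_def)
      have h: "hvd g v y (g v)" for v y using hvd_linear[OF bl hvd_id] by simp
      show ?thesis unfolding RP_def
      proof (intro conjI allI ballI)
        show "continuous_on S g" by (rule linear_continuous_on[OF bl])
        show "ldiff g v y" for y v by (rule hvd_ldiff[OF h])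
        show "\<exists>h. Rc S (GX X) h \<and> (\<forall>y\<in>S. pd g v y = h y)" for v
          using hvd_pd[OF h] by (intro exI[of _ "\<lambda>y. g v"]) (auto intro: Rc.const)
      qed
    qed
  qed
qed

abbreviation RcX where "RcX S X \<equiv> Rc S (GX X)"

definition RvX :: "'n::finite par set \<Rightarrow> ('n par \<Rightarrow> ('n, 'm::finite) amb) \<Rightarrow> ('n par \<Rightarrow> ('n, 'm) amb) \<Rightarrow> bool" where
  "RvX S X F \<longleftrightarrow> (\<forall>i. RcX S X (\<lambda>y. fst (F y) $ i)) \<and> (\<forall>i. RcX S X (\<lambda>y. snd (F y) $ i))"

lemma RvX_iterpd: "RvX S X (iterpd X vs)"
  unfolding RvX_def by (auto intro!: Rc.gen simp: GX_def)

lemma RcX_lin: "bounded_linear l \<Longrightarrow> RcX S X l"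
  by (rule Rc.gen) (simp add: GX_def)

lemma RvX_const: "RvX S X (\<lambda>y. c)"
  unfolding RvX_def by (auto intro: Rc.const)

lemma RvX_add: "RvX S X F \<Longrightarrow> RvX S X G \<Longrightarrow> RvX S X (\<lambda>y. F y + G y)"
  unfolding RvX_def by (auto intro: Rc.add)

lemma RvX_diff: "RvX S X F \<Longrightarrow> RvX S X G \<Longrightarrow> RvX S X (\<lambda>y. F y - G y)"
  unfolding RvX_def by (auto intro: Rc_diff)

lemma RvX_scaleR: "RcX S X f \<Longrightarrow> RvX S X F \<Longrightarrow> RvX S X (\<lambda>y. f y *\<^sub>R F y)"
  unfolding RvX_def by (auto intro: Rc.mult)

lemma RvX_sum: "finite K \<Longrightarrow> (\<And>k. k \<in> K \<Longrightarrow> RvX S X (F k)) \<Longrightarrow> RvX S X (\<lambda>y. \<Sum>k\<in>K. F k y)"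
  by (induction K rule: finite_induct) (auto intro: RvX_add RvX_const)

lemma RcX_inner_vec: "(\<And>i. RcX S X (\<lambda>y. f y $ i)) \<Longrightarrow> (\<And>i. RcX S X (\<lambda>y. g y $ i)) \<Longrightarrow>
    RcX S X (\<lambda>y. (f y :: real^'k::finite) \<bullet> g y)"
  unfolding inner_vec_def by (auto intro!: Rc_sum Rc.mult)

lemma RcX_mink: "RvX S X F \<Longrightarrow> RvX S X G \<Longrightarrow> RcX S X (\<lambda>y. mink (F y) (G y))"
  unfolding mink_def RvX_def by (intro Rc_diff RcX_inner_vec) auto

lemma RcX_det: "(\<And>i j. RcX S X (\<lambda>y. M y $ i $ j)) \<Longrightarrow> RcX S X (\<lambda>y. det (M y :: real^'k::finite^'k))"
  unfolding det_def by (auto intro!: Rc_sum Rc.mult Rc_prod Rc.const simp: finite_permutations)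

lemma schwarzX:
  fixes X :: "'n::finite par \<Rightarrow> ('n, 'm::finite) amb"
  assumes sm: "smooth_on S X" and y: "y \<in> S"
  shows "iterpd X (v # w # vs) y = iterpd X (w # v # vs) y"
proof -
  have it: "iterpd X (ws @ vs) = iterpd (iterpd X vs) ws" for ws by (induction ws) auto
  have sm': "smooth_on S (iterpd X vs)" by (rule smooth_iterpd[OF sm])
  have key: "l (iterpd X (v # w # vs) y) = l (iterpd X (w # v # vs) y)" if l: "bounded_linear l" for l :: "('n, 'm) amb \<Rightarrow> real"
  proof -
    have sml: "smooth_on S (\<lambda>y. l (iterpd X vs y))" by (rule smooth_comp[OF sm' l])
    have "l (iterpd X (v # w # vs) y) = l (iterpd (iterpd X vs) [v, w] y)" using it[of "[v, w]"] by simp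
    also have "\<dots> = iterpd (\<lambda>y. l (iterpd X vs y)) [v, w] y" by (rule smooth_comp_iter[OF sm' l y, symmetric])
    also have "\<dots> = iterpd (\<lambda>y. l (iterpd X vs y)) [w, v] y" using schwarz[OF sml y, of w v] by simp
    also have "\<dots> = l (iterpd (iterpd X vs) [w, v] y)" by (rule smooth_comp_iter[OF sm' l y])
    also have "\<dots> = l (iterpd X (w # v # vs) y)" using it[of "[w, v]"] by simp
    finally show ?thesis .
  qed
  show ?thesis
    using key[OF bl_fst_nth] key[OF bl_snd_nth] by (simp add: prod_eq_iff vec_eq_iff)
qed


lemma quad_insert:
  fixes M :: "'i \<Rightarrow> 'i \<Rightarrow> real"
  assumes K: "finite K" "k \<notin> K" and sym: "\<And>i j. M i j = M j i"
  shows "(\<Sum>i\<in>insert k K. \<Sum>j\<in>insert k K. x i * x j * M i j)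
       = (x k)\<^sup>2 * M k k + 2 * x k * (\<Sum>j\<in>K. x j * M k j) + (\<Sum>i\<in>K. \<Sum>j\<in>K. x i * x j * M i j)"
proof -
  have 1: "(\<Sum>i\<in>insert k K. \<Sum>j\<in>insert k K. x i * x j * M i j)
      = x k * x k * M k k + (\<Sum>j\<in>K. x k * x j * M k j) + ((\<Sum>i\<in>K. x i * x k * M i k) + (\<Sum>i\<in>K. \<Sum>j\<in>K. x i * x j * M i j))"
    using K by (simp add: sum.insert sum.distrib)
  have 2: "(\<Sum>i\<in>K. x i * x k * M i k) = (\<Sum>j\<in>K. x k * x j * M k j)"
  proof (intro sum.cong refl)
    fix i show "x i * x k * M i k = x k * x i * M k i" by (simp only: sym[of i k] mult.commute)
  qed
  have 3: "(\<Sum>j\<in>K. x k * x j * M k j) = x k * (\<Sum>j\<in>K. x j * M k j)"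
    by (simp add: sum_distrib_left mult.assoc)
  show ?thesis unfolding 1 2 3 by (simp add: power2_eq_square)
qed

lemma psd_decomp:
  fixes M :: "'i \<Rightarrow> 'i \<Rightarrow> real"
  assumes "finite K" "\<And>i j. M i j = M j i" "\<And>x. (\<Sum>i\<in>K. \<Sum>j\<in>K. x i * x j * M i j) \<ge> 0"
  shows "\<exists>p. \<forall>i\<in>K. \<forall>j\<in>K. M i j = (\<Sum>a\<in>K. p a i * p a j)"
  using assms
proof (induction K arbitrary: M rule: finite_induct)
  case empty then show ?case by simp
next
  case (insert k K)
  note sym = insert.prems(1) and psd = insert.prems(2)
  have Qx: "\<And>x. (x k)\<^sup>2 * M k k + 2 * x k * (\<Sum>j\<in>K. x j * M k j) + (\<Sum>i\<in>K. \<Sum>j\<in>K. x i * x j * M i j) \<ge> 0"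
  proof -
    fix x
    show "?thesis x" using psd[of x] unfolding quad_insert[OF insert.hyps(1,2) sym] .
  qed
  define m where "m = M k k"
  have z1: "(\<Sum>j\<in>K. (if j = k then 1 else 0) * M k j) = 0" by (rule sum.neutral) (use insert.hyps(2) in auto)
  have z2: "(\<Sum>i\<in>K. \<Sum>j\<in>K. (if i = k then 1 else 0) * (if j = k then 1 else 0) * M i j) = 0"
    by (rule sum.neutral) (use insert.hyps(2) in auto)
  have m0: "m \<ge> 0" using Qx[of "\<lambda>i. if i = k then 1 else 0"] z1 z2 by (simp add: m_def)
  define q where "q i = (if m > 0 then M k i / sqrt m else 0)" for i
  define M' where "M' i j = M i j - q i * q j" for i j
  have sym': "M' i j = M' j i" for i j unfolding M'_def by (simp add: sym[of i j] mult.commute)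
  have qk: "M k j = q k * q j" if j: "j \<in> insert k K" for j
  proof (cases "m > 0")
    case True
    then show ?thesis by (simp add: q_def m_def[symmetric] real_div_sqrt)
  next
    case False
    then have m00: "m = 0" using m0 by simp
    have "M k j = 0"
    proof (cases "j = k")
      case True then show ?thesis using m00 by (simp add: m_def)
    next
      case False
      then have jK: "j \<in> K" using j by simp
      have "0 \<le> (t)\<^sup>2 * m + 2 * t * M k j + M j j" for t
      proof -
        define x where "x i = (if i = k then t else if i = j then 1 else 0)" for i
        have xl: "\<And>l. l \<in> K \<Longrightarrow> x l = (if l = j then 1 else 0)" using insert.hyps(2) by (auto simp: x_def)
        have s1: "(\<Sum>l\<in>K. x l * M k l) = (\<Sum>l\<in>K. if l = j then M k l else 0)" by (rule sum.cong) (auto simp: xl)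
        have s2: "(\<Sum>i\<in>K. \<Sum>l\<in>K. x i * x l * M i l) = (\<Sum>i\<in>K. if i = j then (\<Sum>l\<in>K. if l = j then M i l else 0) else 0)"
          by (rule sum.cong) (auto simp: xl intro!: sum.cong)
        have xk: "x k = t" by (simp add: x_def)
        show ?thesis using Qx[of x] unfolding s1 s2 xk using insert.hyps(1) jK by (simp add: m_def)
      qed
      from this[of "- (M j j + 1) / (2 * M k j)"] show "M k j = 0" using m00
        by (cases "M k j = 0") (simp_all add: field_simps)
    qed
    then show ?thesis by (simp add: q_def False)
  qed
  have psd': "(\<Sum>i\<in>K. \<Sum>j\<in>K. x i * x j * M' i j) \<ge> 0" for x
  proof (cases "m > 0")
    case True
    define b where "b = (\<Sum>j\<in>K. x j * M k j)"
    define x' where "x' i = (if i = k then - b / m else x i)" for i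
    have "0 \<le> (x' k)\<^sup>2 * M k k + 2 * x' k * (\<Sum>j\<in>K. x' j * M k j) + (\<Sum>i\<in>K. \<Sum>j\<in>K. x' i * x' j * M i j)"
      by (rule Qx)
    also have "(\<Sum>j\<in>K. x' j * M k j) = b" unfolding b_def x'_def using insert.hyps(2) by (intro sum.cong) auto
    also have "(\<Sum>i\<in>K. \<Sum>j\<in>K. x' i * x' j * M i j) = (\<Sum>i\<in>K. \<Sum>j\<in>K. x i * x j * M i j)"
      unfolding x'_def using insert.hyps(2) by (intro sum.cong) auto
    finally have A: "0 \<le> (\<Sum>i\<in>K. \<Sum>j\<in>K. x i * x j * M i j) - b\<^sup>2 / m"
      using True by (simp add: x'_def m_def[symmetric] power2_eq_square field_simps)
    have "(\<Sum>i\<in>K. \<Sum>j\<in>K. x i * x j * M' i j) = (\<Sum>i\<in>K. \<Sum>j\<in>K. x i * x j * M i j) - (\<Sum>i\<in>K. x i * q i) * (\<Sum>j\<in>K. x j * q j)"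
      unfolding M'_def by (simp add: right_diff_distrib sum_subtractf sum_distrib_left sum_distrib_right algebra_simps)
    also have "(\<Sum>i\<in>K. x i * q i) = b / sqrt m"
      unfolding b_def q_def using True by (simp add: sum_divide_distrib)
    also have "b / sqrt m * (b / sqrt m) = b\<^sup>2 / m" using True by (simp add: power2_eq_square)
    finally show ?thesis using A by simp
  next
    case False
    then have q0: "q i = 0" for i by (simp add: q_def)
    have "0 \<le> ((\<lambda>i. if i = k then 0 else x i) k)\<^sup>2 * M k k + 2 * (\<lambda>i. if i = k then 0 else x i) k * (\<Sum>j\<in>K. (\<lambda>i. if i = k then 0 else x i) j * M k j)
        + (\<Sum>i\<in>K. \<Sum>j\<in>K. (\<lambda>i. if i = k then 0 else x i) i * (\<lambda>i. if i = k then 0 else x i) j * M i j)"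
      by (rule Qx)
    also have "\<dots> = (\<Sum>i\<in>K. \<Sum>j\<in>K. x i * x j * M i j)"
      using insert.hyps(2) by (simp, intro sum.cong) auto
    finally show ?thesis by (simp add: M'_def q0)
  qed
  obtain p' where p': "\<forall>i\<in>K. \<forall>j\<in>K. M' i j = (\<Sum>a\<in>K. p' a i * p' a j)"
    using insert.IH[of M'] sym' psd' by blast
  define p where "p a i = (if a = k then q i else if i = k then 0 else p' a i)" for a i
  have "M i j = (\<Sum>a\<in>insert k K. p a i * p a j)" if ij: "i \<in> insert k K" "j \<in> insert k K" for i j
  proof -
    have s: "(\<Sum>a\<in>insert k K. p a i * p a j) = q i * q j + (\<Sum>a\<in>K. p a i * p a j)"
      using insert.hyps by (simp add: p_def)
    show ?thesis
    proof (cases "i = k \<or> j = k")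
      case True
      then have "(\<Sum>a\<in>K. p a i * p a j) = 0" using insert.hyps(2) by (auto simp: p_def intro!: sum.neutral)
      then show ?thesis using s True qk ij sym by (auto simp: mult.commute)
    next
      case False
      then have "(\<Sum>a\<in>K. p a i * p a j) = (\<Sum>a\<in>K. p' a i * p' a j)" using insert.hyps(2) by (intro sum.cong) (auto simp: p_def)
      moreover have "M' i j = (\<Sum>a\<in>K. p' a i * p' a j)" using p' False ij by simp
      ultimately show ?thesis using s by (simp add: M'_def)
    qed
  qed
  then show ?case by blast
qed


definition quad :: "real^'n^'n \<Rightarrow> real^'n \<Rightarrow> real" where
  "quad M x = (\<Sum>i\<in>UNIV. \<Sum>j\<in>UNIV. x$i * x$j * M$i$j)"

lemma quad_eq: "quad M x = x \<bullet> (M *v x)"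
  by (auto simp: quad_def inner_vec_def matrix_vector_mult_def sum_distrib_left mult_ac intro!: sum.cong)

lemma mink_sumsum:
  "mink (\<Sum>i\<in>I. a i *\<^sub>R P i) (\<Sum>j\<in>J. b j *\<^sub>R Q j) = (\<Sum>i\<in>I. \<Sum>j\<in>J. a i * b j * mink (P i) (Q j))"
  unfolding mink_sum_left unfolding mink_sum_right by (simp add: mink_scaleR_left mink_scaleR_right mult_ac)

lemma sum_delta_mult [simp]: "(\<Sum>j\<in>(UNIV::'k::finite set). (f j::real) * (if j = k then 1 else 0)) = f k"
proof -
  have "(\<Sum>j\<in>(UNIV::'k set). f j * (if j = k then 1 else 0)) = (\<Sum>j\<in>UNIV. if j = k then f j else 0)"
    by (rule sum.cong) auto
  then show ?thesis by simp
qed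

lemma gmat_sym: "gmat X y $ i $ j = gmat X y $ j $ i"
  by (simp add: gmat_def mink_sym)

lemma transpose_gmat: "transpose (gmat X y) = gmat X y"
  by (simp add: transpose_def vec_eq_iff gmat_sym)

lemma quad_gmat: "mink (\<Sum>i\<in>UNIV. v$i *\<^sub>R dX X i y) (\<Sum>i\<in>UNIV. v$i *\<^sub>R dX X i y) = quad (gmat X y) v"
  by (simp add: mink_sumsum quad_def gmat_def)

lemma gmat_pos: "spacelike_at X y \<Longrightarrow> v \<noteq> 0 \<Longrightarrow> quad (gmat X y) v > 0"
proof -
  assume "spacelike_at X y" "v \<noteq> 0"
  then have "0 < mink (\<Sum>i\<in>UNIV. v$i *\<^sub>R dX X i y) (\<Sum>i\<in>UNIV. v$i *\<^sub>R dX X i y)"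
    by (simp add: spacelike_at_def)
  then show ?thesis by (simp only: quad_gmat)
qed

lemma gmat_nonneg: "spacelike_at X y \<Longrightarrow> quad (gmat X y) v \<ge> 0"
  using gmat_pos[of X y v] by (cases "v = 0") (auto simp: quad_def less_imp_le)

lemma gmat_invertible:
  assumes sp: "spacelike_at X y" shows "invertible (gmat X y)"
proof -
  have "\<forall>x. gmat X y *v x = 0 \<longrightarrow> x = 0"
  proof (intro allI impI)
    fix x assume "gmat X y *v x = 0"
    then have "quad (gmat X y) x = 0" by (simp add: quad_eq)
    then show "x = 0" using gmat_pos[OF sp, of x] by (cases "x = 0") auto
  qed
  then show ?thesis using matrix_left_invertible_ker invertible_left_inverse by blast
qed

lemma ginv_mult:
  assumes sp: "spacelike_at X y"
  shows "ginv X y ** gmat X y = mat 1" "gmat X y ** ginv X y = mat 1"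
proof -
  have "\<exists>A'. gmat X y ** A' = mat 1 \<and> A' ** gmat X y = mat 1"
    using gmat_invertible[OF sp] unfolding invertible_def by blast
  then have "gmat X y ** ginv X y = mat 1 \<and> ginv X y ** gmat X y = mat 1"
    unfolding ginv_def matrix_inv_def by (rule someI_ex)
  then show "ginv X y ** gmat X y = mat 1" "gmat X y ** ginv X y = mat 1" by auto
qed

lemma ginv_gmat_entry:
  "spacelike_at X y \<Longrightarrow> (\<Sum>k\<in>UNIV. ginv X y $ i $ k * gmat X y $ k $ j) = (if i = j then 1 else 0)"
  using ginv_mult(1)[of X y] by (simp add: vec_eq_iff matrix_matrix_mult_def mat_def)

lemma gmat_ginv_entry:
  "spacelike_at X y \<Longrightarrow> (\<Sum>k\<in>UNIV. gmat X y $ i $ k * ginv X y $ k $ j) = (if i = j then 1 else 0)"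
  using ginv_mult(2)[of X y] by (simp add: vec_eq_iff matrix_matrix_mult_def mat_def)

lemma ginv_sym:
  assumes sp: "spacelike_at X y" shows "ginv X y $ i $ j = ginv X y $ j $ i"
proof -
  let ?g = "gmat X y" and ?h = "ginv X y"
  have "transpose ?h ** ?g = transpose (?g ** ?h)"
    by (simp add: matrix_transpose_mul transpose_gmat)
  also have "\<dots> = mat 1" using ginv_mult(2)[OF sp] by simp
  finally have l: "transpose ?h ** ?g = mat 1" .
  have "transpose ?h = transpose ?h ** (?g ** ?h)" using ginv_mult(2)[OF sp] by simp
  also have "\<dots> = ?h" by (simp add: matrix_mul_assoc l)
  finally have "transpose ?h $ j $ i = ?h $ j $ i" by simp
  then show ?thesis by (simp add: transpose_def)
qed

lemma transpose_ginv: "spacelike_at X y \<Longrightarrow> transpose (ginv X y) = ginv X y"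
  by (simp add: transpose_def vec_eq_iff ginv_sym)

lemma ginv_nonneg:
  assumes sp: "spacelike_at X y" shows "quad (ginv X y) x \<ge> 0"
proof -
  let ?g = "gmat X y" and ?h = "ginv X y"
  define c where "c = ?h *v x"
  have x: "x = ?g *v c" unfolding c_def by (simp add: matrix_vector_mul_assoc ginv_mult(2)[OF sp])
  have "quad ?h x = x \<bullet> c" by (simp add: quad_eq c_def)
  also have "\<dots> = c \<bullet> (?g *v c)"
    unfolding x by (simp add: inner_commute)
  also have "\<dots> = quad ?g c" by (simp add: quad_eq)
  finally show ?thesis using gmat_nonneg[OF sp] by simp
qed

lemma tproj_alt: "tproj X y v = (\<Sum>i\<in>UNIV. (\<Sum>j\<in>UNIV. ginv X y $ i $ j * mink v (dX X j y)) *\<^sub>R dX X i y)"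
  by (simp add: tproj_def scaleR_sum_left)

lemma mink_tproj_X:
  assumes sp: "spacelike_at X y"
  shows "mink (tproj X y v) (dX X k y) = mink v (dX X k y)"
proof -
  have "mink (tproj X y v) (dX X k y) = (\<Sum>i\<in>UNIV. \<Sum>j\<in>UNIV. ginv X y $ i $ j * mink v (dX X j y) * gmat X y $ i $ k)"
    by (simp add: tproj_def mink_simps gmat_def)
  also have "\<dots> = (\<Sum>j\<in>UNIV. mink v (dX X j y) * (\<Sum>i\<in>UNIV. ginv X y $ j $ i * gmat X y $ i $ k))"
    by (subst sum.swap) (simp add: sum_distrib_left ginv_sym[OF sp] mult.commute mult.left_commute)
  also have "\<dots> = mink v (dX X k y)" by (simp add: ginv_gmat_entry[OF sp])
  finally show ?thesis .
qed

lemma mink_nproj_X: "spacelike_at X y \<Longrightarrow> mink (nproj X y v) (dX X k y) = 0"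
  by (simp add: nproj_def mink_diff_left mink_tproj_X)

lemma mink_nproj_span: "spacelike_at X y \<Longrightarrow> mink (nproj X y v) (\<Sum>k\<in>UNIV. c k *\<^sub>R dX X k y) = 0"
  by (simp add: mink_sum_right mink_scaleR_right mink_nproj_X)

lemma mink_span_nproj: "spacelike_at X y \<Longrightarrow> mink (\<Sum>k\<in>UNIV. c k *\<^sub>R dX X k y) (nproj X y v) = 0"
  by (subst mink_sym) (rule mink_nproj_span)

lemma span_nonneg: "spacelike_at X y \<Longrightarrow> mink (\<Sum>k\<in>UNIV. c k *\<^sub>R dX X k y) (\<Sum>k\<in>UNIV. c k *\<^sub>R dX X k y) \<ge> 0"
  using quad_gmat[of "\<chi> k. c k" X y] gmat_nonneg[of X y "\<chi> k. c k"] by simp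

lemma normal_nonpos:
  fixes X :: "'n::finite par \<Rightarrow> ('n, 'm::finite) amb"
  assumes sp: "spacelike_at X y" and w: "\<And>k. mink w (dX X k y) = 0"
  shows "mink w w \<le> 0"
proof -
  define f where "f c = fst (\<Sum>i\<in>UNIV. (c::real^'n) $ i *\<^sub>R dX X i y)" for c
  have lin: "linear f"
  proof (rule linearI)
    show "f (b + c) = f b + f c" for b c by (simp add: f_def scaleR_add_left sum.distrib)
    show "f (r *\<^sub>R c) = r *\<^sub>R f c" for r c
    proof -
      have "(\<Sum>i\<in>UNIV. (r * c $ i) *\<^sub>R dX X i y) = r *\<^sub>R (\<Sum>i\<in>UNIV. c $ i *\<^sub>R dX X i y)" by (simp add: scaleR_sum_right)
      then show ?thesis by (simp add: f_def)
    qed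
  qed
  have inj: "inj f"
  proof (rule linear_injective_0[OF lin, THEN iffD2], intro allI impI)
    fix c assume "f c = 0"
    then have "mink (\<Sum>i\<in>UNIV. c $ i *\<^sub>R dX X i y) (\<Sum>i\<in>UNIV. c $ i *\<^sub>R dX X i y) \<le> 0"
      by (simp add: mink_def f_def)
    then show "c = 0" using sp unfolding spacelike_at_def by force
  qed
  from surjD[OF linear_inj_imp_surj[OF lin inj], of "fst w"] obtain c where c: "f c = fst w" by auto
  define \<tau> where "\<tau> = (\<Sum>i\<in>UNIV. c $ i *\<^sub>R dX X i y)"
  have fst0: "fst (w - \<tau>) = 0" using c by (simp add: f_def \<tau>_def)
  have u: "mink (w - \<tau>) (w - \<tau>) \<le> 0" using fst0 by (simp add: mink_def)
  have wt: "mink w \<tau> = 0" by (simp add: \<tau>_def mink_sum_right mink_scaleR_right w)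
  have tt: "mink \<tau> \<tau> \<ge> 0" unfolding \<tau>_def using span_nonneg[OF sp, of "\<lambda>i. c $ i"] by simp
  have "mink (w - \<tau>) (w - \<tau>) = mink w w - 2 * mink w \<tau> + mink \<tau> \<tau>"
    by (simp add: mink_simps mink_sym[of \<tau> w])
  then show ?thesis using u wt tt by simp
qed

lemma wsq_barrier:
  fixes X :: "'n::finite par \<Rightarrow> ('n, 'm::finite) amb"
  assumes sp: "spacelike_at X y"
  shows "- mink (nproj X y v) (nproj X y v) \<ge> - mink (v + (\<Sum>k\<in>UNIV. c k *\<^sub>R dX X k y)) (v + (\<Sum>k\<in>UNIV. c k *\<^sub>R dX X k y))"
proof -
  define d where "d i = (\<Sum>j\<in>UNIV. ginv X y $ i $ j * mink v (dX X j y)) + c i" for i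
  define \<sigma> where "\<sigma> = (\<Sum>k\<in>UNIV. d k *\<^sub>R dX X k y)"
  have dec: "v + (\<Sum>k\<in>UNIV. c k *\<^sub>R dX X k y) = nproj X y v + \<sigma>"
    by (simp add: nproj_def tproj_alt \<sigma>_def d_def scaleR_add_left sum.distrib)
  have "mink (nproj X y v + \<sigma>) (nproj X y v + \<sigma>) = mink (nproj X y v) (nproj X y v) + mink \<sigma> \<sigma>"
    using mink_nproj_span[OF sp, of v d] mink_span_nproj[OF sp, of d v]
    by (simp add: mink_add_left mink_add_right \<sigma>_def)
  moreover have "mink \<sigma> \<sigma> \<ge> 0" unfolding \<sigma>_def by (rule span_nonneg[OF sp])
  ultimately show ?thesis unfolding dec by simp
qed


lemma line_in_open:
  fixes z v :: "'a::real_normed_vector"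
  assumes "open S" "z \<in> S"
  shows "\<exists>d>0. \<forall>s. \<bar>s\<bar> < d \<longrightarrow> z + s *\<^sub>R v \<in> S"
proof -
  obtain r where r: "r > 0" "ball z r \<subseteq> S" using assms openE by blast
  have np: "norm v + 1 > 0" using norm_ge_zero[of v] by linarith
  show ?thesis
  proof (intro exI[of _ "r / (norm v + 1)"] conjI allI impI)
    show "r / (norm v + 1) > 0" using r np by simp
    fix s :: real assume s: "\<bar>s\<bar> < r / (norm v + 1)"
    have "norm (s *\<^sub>R v) = \<bar>s\<bar> * norm v" by simp
    also have "\<dots> \<le> \<bar>s\<bar> * (norm v + 1)" by (simp add: mult_left_mono)
    also have "\<dots> < r" using s np by (simp add: pos_less_divide_eq)
    finally show "z + s *\<^sub>R v \<in> S" using r(2) by (auto simp: dist_norm)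
  qed
qed

lemma min_first:
  fixes h :: "'a::euclidean_space \<Rightarrow> real"
  assumes sm: "smooth_on S h" and z: "z \<in> S" and mn: "\<forall>y\<in>S. h z \<le> h y"
  shows "pd h v z = 0"
proof -
  obtain d where d: "d > 0" "\<forall>s. \<bar>s\<bar> < d \<longrightarrow> z + s *\<^sub>R v \<in> S"
    using line_in_open[OF smooth_on_open[OF sm] z] by blast
  have D: "((\<lambda>s. h (z + s *\<^sub>R v)) has_real_derivative pd h v z) (at 0)"
    using smooth_hvd0[OF sm z] by (simp add: hvd_real)
  show ?thesis
    by (rule DERIV_local_min[OF D d(1)]) (use d mn in auto)
qed

lemma min_second:
  fixes h :: "'a::euclidean_space \<Rightarrow> real"
  assumes sm: "smooth_on S h" and z: "z \<in> S" and mn: "\<forall>y\<in>S. h z \<le> h y"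
  shows "pd (pd h v) v z \<ge> 0"
proof (rule ccontr)
  assume neg: "\<not> pd (pd h v) v z \<ge> 0"
  obtain d where d: "d > 0" "\<forall>s. \<bar>s\<bar> < d \<longrightarrow> z + s *\<^sub>R v \<in> S"
    using line_in_open[OF smooth_on_open[OF sm] z] by blast
  have D2: "((\<lambda>s. pd h v (z + s *\<^sub>R v)) has_real_derivative pd (pd h v) v z) (at 0)"
    using smooth_hvd[OF sm z, of "[v]" v] by (simp add: hvd_real)
  obtain d2 where d2: "d2 > 0" "\<forall>t>0. t < d2 \<longrightarrow> pd h v (z + (0 + t) *\<^sub>R v) < pd h v (z + 0 *\<^sub>R v)"
    using DERIV_neg_dec_right[OF D2] neg by force
  have h0: "pd h v z = 0" by (rule min_first[OF sm z mn])
  define s where "s = min d d2 / 2"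
  have s: "0 < s" "s < d" "s < d2" using d d2 by (auto simp: s_def)
  have der: "((\<lambda>s. h (z + s *\<^sub>R v)) has_real_derivative pd h v (z + t *\<^sub>R v)) (at t)" if "0 \<le> t" "t \<le> s" for t
  proof -
    have "z + t *\<^sub>R v \<in> S" using d that s by auto
    then show ?thesis using hvd_shift[of h v z t] smooth_hvd0[OF sm] by (simp add: has_real_derivative_iff_has_vector_derivative)
  qed
  obtain \<sigma> where \<sigma>: "0 < \<sigma>" "\<sigma> < s" "h (z + s *\<^sub>R v) - h (z + 0 *\<^sub>R v) = (s - 0) * pd h v (z + \<sigma> *\<^sub>R v)"
    using MVT2[OF s(1), of "\<lambda>s. h (z + s *\<^sub>R v)" "\<lambda>t. pd h v (z + t *\<^sub>R v)"] der by auto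
  have "pd h v (z + \<sigma> *\<^sub>R v) < 0" using d2(2)[rule_format, of \<sigma>] \<sigma> s h0 by simp
  moreover have "s * pd h v (z + \<sigma> *\<^sub>R v) < 0" by (rule mult_pos_neg) (use s calculation in auto)
  ultimately have "h (z + s *\<^sub>R v) < h z" using \<sigma> by simp
  moreover have "z + s *\<^sub>R v \<in> S" using d s by auto
  ultimately show False using mn by force
qed

lemma min_trace:
  fixes h :: "'n::finite par \<Rightarrow> real" and M :: "real^'n^'n"
  assumes sm: "smooth_on S h" and z: "z \<in> S" and mn: "\<forall>y\<in>S. h z \<le> h y"
    and Msym: "\<And>i j. M $ i $ j = M $ j $ i" and Mpsd: "\<And>x. quad M x \<ge> 0"
  shows "(\<Sum>i\<in>UNIV. \<Sum>j\<in>UNIV. M $ i $ j * pd (pd h (dirx j)) (dirx i) z) \<ge> 0"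
proof -
  have S: "open S" using sm by (rule smooth_on_open)
  have Mpsd': "0 \<le> (\<Sum>i\<in>UNIV. \<Sum>j\<in>UNIV. x i * x j * M $ i $ j)" for x
    using Mpsd[of "\<chi> i. x i"] by (simp add: quad_def)
  obtain p :: "'n \<Rightarrow> 'n \<Rightarrow> real" where p: "\<forall>i\<in>UNIV. \<forall>j\<in>UNIV. M $ i $ j = (\<Sum>a\<in>UNIV. p a i * p a j)"
    using psd_decomp[of "UNIV::'n set" "\<lambda>i j. M $ i $ j", OF finite Msym Mpsd'] by blast
  define hh where "hh i j = pd (pd h (dirx j)) (dirx i) z" for i j
  have each: "(\<Sum>i\<in>UNIV. \<Sum>j\<in>UNIV. p a i * p a j * hh i j) \<ge> 0" for a
  proof -
    define P where "P = (\<Sum>i\<in>UNIV. p a i *\<^sub>R (dirx i :: 'n par))"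
    have 1: "pd h P y = (\<Sum>j\<in>UNIV. p a j * pd h (dirx j) y)" if "y \<in> S" for y
      unfolding P_def by (rule pd_sum_dir[OF sm that]) simp
    have "pd (pd h P) P z = pd (\<lambda>y. \<Sum>j\<in>UNIV. p a j * pd h (dirx j) y) P z"
      by (rule pd_local[OF S z]) (simp add: 1)
    also have "\<dots> = (\<Sum>j\<in>UNIV. p a j * pd (pd h (dirx j)) P z)"
    proof (rule hvd_pd, rule hvd_cong, rule hvd_sum)
      fix j
      show "hvd (\<lambda>y. p a j * pd h (dirx j) y) P z (0 * pd h (dirx j) z + p a j * pd (pd h (dirx j)) P z)"
        by (rule hvd_mult[OF hvd_const]) (use smooth_hvd[OF sm z, of "[dirx j]" P] in simp)
    qed simp_all
    also have "\<dots> = (\<Sum>j\<in>UNIV. p a j * (\<Sum>i\<in>UNIV. p a i * hh i j))"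
    proof (rule sum.cong[OF refl])
      fix j
      have smj: "smooth_on S (pd h (dirx j))" using smooth_iterpd[OF sm, of "[dirx j]"] by simp
      show "p a j * pd (pd h (dirx j)) P z = p a j * (\<Sum>i\<in>UNIV. p a i * hh i j)"
        unfolding P_def hh_def by (subst pd_sum_dir[OF smj z]) simp_all
    qed
    also have "\<dots> = (\<Sum>i\<in>UNIV. \<Sum>j\<in>UNIV. p a i * p a j * hh i j)"
      by (subst sum.swap) (simp add: sum_distrib_left mult_ac)
    finally show ?thesis using min_second[OF sm z mn, of P] by simp
  qed
  have "(\<Sum>i\<in>UNIV. \<Sum>j\<in>UNIV. M $ i $ j * hh i j) = (\<Sum>a\<in>UNIV. \<Sum>i\<in>UNIV. \<Sum>j\<in>UNIV. p a i * p a j * hh i j)"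
    using p by (simp add: sum_distrib_right) (subst sum.swap, rule sum.cong[OF refl], subst sum.swap, simp)
  also have "\<dots> \<ge> 0" by (rule sum_nonneg) (use each in auto)
  finally show ?thesis by (simp add: hh_def)
qed


lemma heat_prod_exp:
  fixes X :: "'n::finite par \<Rightarrow> ('n, 'm::finite) amb" and \<phi> u :: "'n par \<Rightarrow> real"
  assumes sp: "smooth_on S \<phi>" and su: "smooth_on S u" and z: "z \<in> S"
    and Hs: "\<And>i j. ginv X z $ i $ j = ginv X z $ j $ i"
  shows "ddt (\<lambda>y. \<phi> y * exp ((u y)\<^sup>2)) z - lapl X (\<lambda>y. \<phi> y * exp ((u y)\<^sup>2)) z
    = exp ((u z)\<^sup>2) * ((ddt \<phi> z - lapl X \<phi> z) + 2 * u z * \<phi> z * (ddt u z - lapl X u z)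
       - 2 * \<phi> z * (1 + 2 * (u z)\<^sup>2) * (\<Sum>i\<in>UNIV. \<Sum>j\<in>UNIV. ginv X z $ i $ j * pd u (dirx i) z * pd u (dirx j) z)
       - 4 * u z * (\<Sum>i\<in>UNIV. \<Sum>j\<in>UNIV. ginv X z $ i $ j * pd u (dirx i) z * pd \<phi> (dirx j) z))"
proof -
  have S: "open S" using sp by (rule smooth_on_open)
  define E where "E y = exp ((u y)\<^sup>2)" for y
  define F where "F y = \<phi> y * E y" for y
  define F1 where "F1 w y = pd \<phi> w y * E y + \<phi> y * (E y * (2 * u y * pd u w y))" for w y
  have Eh: "hvd E w y (E y * (2 * u y * pd u w y))" if "y \<in> S" for w y
    unfolding E_def by (rule hvd_exp[OF hvd_power2[OF smooth_hvd0[OF su that]]])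
  have F1h: "hvd F w y (F1 w y)" if "y \<in> S" for w y
    unfolding F_def F1_def by (rule hvd_mult[OF smooth_hvd0[OF sp that] Eh[OF that]])
  have pdF: "pd F w y = F1 w y" if "y \<in> S" for w y using hvd_pd[OF F1h[OF that]] .
  let ?H = "ginv X z" and ?G = "\<lambda>k i j. christoffel X k i j z"
  define Ez where "Ez = E z"
  define ph where "ph = \<phi> z"
  define uz where "uz = u z"
  define pi where "pi i = pd \<phi> (dirx i) z" for i
  define ui where "ui i = pd u (dirx i) z" for i
  define pij where "pij i j = pd (pd \<phi> (dirx j)) (dirx i) z" for i j
  define uij where "uij i j = pd (pd u (dirx j)) (dirx i) z" for i j
  have D: "pd (pd F (dirx j)) (dirx i) z = Ez * (pij i j + 2 * uz * ui i * pi j + 2 * uz * ui j * pi i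
            + ph * (2 * ui i * ui j + 2 * uz * uij i j + 4 * uz\<^sup>2 * ui i * ui j))" for i j
  proof -
    have "pd (pd F (dirx j)) (dirx i) z = pd (F1 (dirx j)) (dirx i) z"
      by (rule pd_local[OF S z]) (simp add: pdF)
    also have "\<dots> = Ez * (pij i j + 2 * uz * ui i * pi j + 2 * uz * ui j * pi i
            + ph * (2 * ui i * ui j + 2 * uz * uij i j + 4 * uz\<^sup>2 * ui i * ui j))"
    proof (rule hvd_pd, rule hvd_cong)
      have a: "hvd (pd \<phi> (dirx j)) (dirx i) z (pij i j)"
        using smooth_hvd[OF sp z, of "[dirx j]" "dirx i"] by (simp add: pij_def)
      have b: "hvd (pd u (dirx j)) (dirx i) z (uij i j)"
        using smooth_hvd[OF su z, of "[dirx j]" "dirx i"] by (simp add: uij_def)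
      have c: "hvd \<phi> (dirx i) z (pi i)" using smooth_hvd0[OF sp z] by (simp add: pi_def)
      have d: "hvd u (dirx i) z (ui i)" using smooth_hvd0[OF su z] by (simp add: ui_def)
      have e: "hvd E (dirx i) z (Ez * (2 * uz * ui i))" using Eh[OF z] by (simp add: Ez_def uz_def ui_def)
      show "hvd (F1 (dirx j)) (dirx i) z
        (pij i j * Ez + pi j * (Ez * (2 * uz * ui i)) + (pi i * (Ez * (2 * uz * ui j)) +
          ph * ((Ez * (2 * uz * ui i)) * (2 * uz * ui j) + Ez * ((0 * uz + 2 * ui i) * ui j + 2 * uz * uij i j))))"
        unfolding F1_def
        by (rule hvd_cong[OF hvd_add[OF hvd_mult[OF a e] hvd_mult[OF c hvd_mult[OF e hvd_mult[OF hvd_mult[OF hvd_const[of 2] d] b]]]]])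
          (simp add: Ez_def uz_def ui_def pi_def ph_def)
    qed (simp add: algebra_simps power2_eq_square)
    finally show ?thesis .
  qed
  have D1: "pd F (dirx k) z = Ez * (pi k + 2 * uz * ph * ui k)" for k
    using pdF[OF z] by (simp add: F1_def Ez_def pi_def ui_def uz_def ph_def algebra_simps)
  have Dt: "ddt F z = Ez * (ddt \<phi> z + 2 * uz * ph * ddt u z)"
    using pdF[OF z, of dirt] by (simp add: ddt_def F1_def Ez_def ph_def uz_def algebra_simps)
  define C where "C i j = (\<Sum>k\<in>UNIV. ?G k i j * pi k)" for i j
  define Cu where "Cu i j = (\<Sum>k\<in>UNIV. ?G k i j * ui k)" for i j
  have R: "?H $ i $ j * (pd (pd F (dirx j)) (dirx i) z - (\<Sum>k\<in>UNIV. ?G k i j * pd F (dirx k) z))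
     = Ez * (?H $ i $ j * (pij i j - C i j) + 2 * uz * ph * (?H $ i $ j * (uij i j - Cu i j))
        + 2 * uz * (?H $ i $ j * ui i * pi j) + 2 * uz * (?H $ i $ j * ui j * pi i)
        + ph * (2 + 4 * uz\<^sup>2) * (?H $ i $ j * ui i * ui j))" for i j
  proof -
    have "(\<Sum>k\<in>UNIV. ?G k i j * pd F (dirx k) z) = Ez * C i j + 2 * uz * ph * Ez * Cu i j"
      unfolding D1 C_def Cu_def by (simp add: sum.distrib sum_distrib_left algebra_simps)
    then show ?thesis unfolding D by (simp add: algebra_simps)
  qed
  have lapF: "lapl X F z = Ez * (lapl X \<phi> z + 2 * uz * ph * lapl X u z
        + 2 * uz * (\<Sum>i\<in>UNIV. \<Sum>j\<in>UNIV. ?H $ i $ j * ui i * pi j) + 2 * uz * (\<Sum>i\<in>UNIV. \<Sum>j\<in>UNIV. ?H $ i $ j * ui j * pi i)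
        + ph * (2 + 4 * uz\<^sup>2) * (\<Sum>i\<in>UNIV. \<Sum>j\<in>UNIV. ?H $ i $ j * ui i * ui j))"
    unfolding lapl_def R
    by (simp add: C_def Cu_def pi_def ui_def pij_def uij_def sum.distrib sum_distrib_left distrib_left)
  have swap: "(\<Sum>i\<in>UNIV. \<Sum>j\<in>UNIV. ?H $ i $ j * ui j * pi i) = (\<Sum>i\<in>UNIV. \<Sum>j\<in>UNIV. ?H $ i $ j * ui i * pi j)"
    by (subst sum.swap) (simp add: Hs)
  show ?thesis
    unfolding F_def[symmetric] E_def[symmetric] Dt lapF swap
    by (simp add: Ez_def uz_def ph_def ui_def pi_def algebra_simps)
qed


locale mcf =
  fixes X :: "'n::finite par \<Rightarrow> ('n, 'm::finite) amb" and S :: "'n par set"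
  assumes sm: "smooth_on S X" and sp: "\<forall>y\<in>S. spacelike_at X y" and fl: "\<forall>y\<in>S. ddt X y = mcv X y"
begin

lemma S_open: "open S" using sm by (rule smooth_on_open)

lemma GXRP: "\<forall>g\<in>GX X. RP S (GX X) g" by (rule GX_RP[OF sm])

lemma Rc_sm: "RcX S X f \<Longrightarrow> smooth_on S f"
  by (rule Rc_smooth[OF S_open GXRP])

lemma Rc_hvd: "RcX S X f \<Longrightarrow> y \<in> S \<Longrightarrow> hvd f v y (pd f v y)"
  using smooth_hvd0[OF Rc_sm] by blast

lemma dX_it: "dX X i = iterpd X [dirx i]" by (simp add: dX_def[abs_def])
lemma ddX_it: "ddX X i j = iterpd X [dirx i, dirx j]" by (simp add: ddX_def[abs_def] dX_it)

lemma Xh: "y \<in> S \<Longrightarrow> hvd (iterpd X vs) v y (iterpd X (v # vs) y)"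
  by (rule smooth_hvd[OF sm])

lemma Xh0: "y \<in> S \<Longrightarrow> hvd X v y (iterpd X [v] y)"
  using Xh[of y "[]"] by simp

lemma RvX_dX: "RvX S X (dX X i)" unfolding dX_it by (rule RvX_iterpd)
lemma RvX_ddX: "RvX S X (ddX X i j)" unfolding ddX_it by (rule RvX_iterpd)

lemma Rc_gmat: "RcX S X (\<lambda>y. gmat X y $ a $ b)"
  unfolding gmat_def by (simp add: RcX_mink[OF RvX_dX RvX_dX])

lemma ginv_cramer:
  assumes y: "y \<in> S"
  shows "ginv X y $ k $ j = det (\<chi> i l. if l = k then (if i = j then 1 else 0) else gmat X y $ i $ l) / det (gmat X y)"
proof -
  have spy: "spacelike_at X y" using sp y by blast
  have d0: "det (gmat X y) \<noteq> 0" using gmat_invertible[OF spy] invertible_det_nz by blast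
  let ?b = "axis j (1::real)"
  have "gmat X y *v (ginv X y *v ?b) = ?b"
    by (simp add: matrix_vector_mul_assoc ginv_mult(2)[OF spy])
  then have "ginv X y *v ?b = (\<chi> k. det (\<chi> i l. if l = k then ?b $ i else gmat X y $ i $ l) / det (gmat X y))"
    using cramer[OF d0] by blast
  then have "(ginv X y *v ?b) $ k = det (\<chi> i l. if l = k then ?b $ i else gmat X y $ i $ l) / det (gmat X y)"
    by simp
  moreover have "(ginv X y *v ?b) $ k = ginv X y $ k $ j"
    by (simp add: matrix_vector_mult_def axis_def if_distrib cong: if_cong)
  moreover have "(\<chi> i l. if l = k then ?b $ i else gmat X y $ i $ l) = (\<chi> i l. if l = k then (if i = j then 1 else 0) else gmat X y $ i $ l)"
    by (simp add: vec_eq_iff axis_def)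
  ultimately show ?thesis by simp
qed

lemma Rc_ginv: "RcX S X (\<lambda>y. ginv X y $ k $ j)"
proof (rule Rc.cong)
  show "RcX S X (\<lambda>y. det (\<chi> i l. if l = k then (if i = j then 1 else 0) else gmat X y $ i $ l) / det (gmat X y))"
  proof (rule Rc_div)
    show "RcX S X (\<lambda>y. det (\<chi> i l. if l = k then (if i = j then 1 else 0) else gmat X y $ i $ l))"
    proof (rule RcX_det)
      fix i l
      show "RcX S X (\<lambda>y. (\<chi> i l. if l = k then (if i = j then 1 else 0) else gmat X y $ i $ l) $ i $ l)"
        by (cases "l = k") (simp_all add: Rc.const Rc_gmat)
    qed
    show "RcX S X (\<lambda>y. det (gmat X y))" by (rule RcX_det) (rule Rc_gmat)
    show "\<forall>y\<in>S. det (gmat X y) \<noteq> 0"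
      using sp gmat_invertible invertible_det_nz by blast
  qed
  show "\<forall>y\<in>S. det (\<chi> i l. if l = k then (if i = j then 1 else 0) else gmat X y $ i $ l) / det (gmat X y) = ginv X y $ k $ j"
    using ginv_cramer by simp
qed

lemma RvX_nproj: "RvX S X F \<Longrightarrow> RvX S X (\<lambda>y. nproj X y (F y))"
  unfolding nproj_def tproj_def
  by (intro RvX_diff RvX_sum RvX_scaleR Rc.mult Rc_ginv RcX_mink RvX_dX) auto

lemma Rc_wsq: "RcX S X (\<lambda>y. wsq X A y)"
  unfolding wsq_def by (intro Rc_neg RcX_mink RvX_nproj RvX_const)

lemma RvX_X: "RvX S X X" using RvX_iterpd[of S X "[]"] by simp

lemma Rc_uA: "RcX S X (\<lambda>y. uA X A y)"
  unfolding uA_def by (intro Rc_neg RcX_mink RvX_const RvX_X)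

lemma gmat_hvd:
  assumes y: "y \<in> S"
  shows "hvd (\<lambda>y. gmat X y $ a $ b) v y (mink (iterpd X [v, dirx a] y) (dX X b y) + mink (dX X a y) (iterpd X [v, dirx b] y))"
  using hvd_mink[OF Xh[OF y, of "[dirx a]"] Xh[OF y, of "[dirx b]"]] unfolding gmat_def dX_it by simp

lemma ginv_hvd:
  assumes y: "y \<in> S"
  shows "hvd (\<lambda>y. ginv X y $ i $ j) v y
           (- (\<Sum>a\<in>UNIV. \<Sum>b\<in>UNIV. ginv X y $ i $ a * pd (\<lambda>y. gmat X y $ a $ b) v y * ginv X y $ b $ j))"
proof -
  have spy: "spacelike_at X y" using sp y by blast
  let ?h = "\<lambda>i j. pd (\<lambda>y. ginv X y $ i $ j) v y" and ?dg = "\<lambda>a b. pd (\<lambda>y. gmat X y $ a $ b) v y"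
  let ?gi = "ginv X y" and ?g = "gmat X y"
  have hh: "hvd (\<lambda>y. ginv X y $ i $ j) v y (?h i j)" for i j by (rule Rc_hvd[OF Rc_ginv y])
  have gh: "hvd (\<lambda>y. gmat X y $ a $ b) v y (?dg a b)" for a b by (rule Rc_hvd[OF Rc_gmat y])
  have zero: "(\<Sum>k\<in>UNIV. ?h i k * ?g $ k $ b + ?gi $ i $ k * ?dg k b) = 0" for i b
  proof -
    have "pd (\<lambda>y. \<Sum>k\<in>UNIV. ginv X y $ i $ k * gmat X y $ k $ b) v y = pd (\<lambda>y. if i = b then 1 else 0) v y"
      by (rule pd_local[OF S_open y]) (simp add: ginv_gmat_entry[OF bspec[OF sp]])
    moreover have "pd (\<lambda>y. if i = b then 1 else (0::real)) v y = 0" by (rule hvd_pd[OF hvd_const])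
    moreover have "pd (\<lambda>y. \<Sum>k\<in>UNIV. ginv X y $ i $ k * gmat X y $ k $ b) v y = (\<Sum>k\<in>UNIV. ?h i k * ?g $ k $ b + ?gi $ i $ k * ?dg k b)"
      by (rule hvd_pd[OF hvd_sum]) (auto intro: hvd_mult[OF hh gh])
    ultimately show ?thesis by simp
  qed
  have "?h i j = (\<Sum>b\<in>UNIV. (\<Sum>k\<in>UNIV. ?h i k * ?g $ k $ b) * ?gi $ b $ j)"
    by (simp add: sum_distrib_right mult.assoc sum.swap[of _ UNIV UNIV] sum_distrib_left[symmetric] gmat_ginv_entry[OF spy])
  also have "\<dots> = (\<Sum>b\<in>UNIV. (- (\<Sum>k\<in>UNIV. ?gi $ i $ k * ?dg k b)) * ?gi $ b $ j)"
  proof (intro sum.cong refl)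
    fix b
    have "(\<Sum>k\<in>UNIV. ?h i k * ?g $ k $ b) = - (\<Sum>k\<in>UNIV. ?gi $ i $ k * ?dg k b)"
      using zero[of i b] by (simp add: sum.distrib eq_neg_iff_add_eq_0)
    then show "(\<Sum>k\<in>UNIV. ?h i k * ?g $ k $ b) * ?gi $ b $ j = (- (\<Sum>k\<in>UNIV. ?gi $ i $ k * ?dg k b)) * ?gi $ b $ j"
      by simp
  qed
  also have "\<dots> = - (\<Sum>a\<in>UNIV. \<Sum>b\<in>UNIV. ?gi $ i $ a * ?dg a b * ?gi $ b $ j)"
    by (subst sum.swap) (simp add: sum_distrib_right sum_negf)
  finally show ?thesis using hh[of i j] by simp
qed


lemma dX_fun [simp]: "pd X (dirx p) = dX X p" by (simp add: dX_def[abs_def])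
lemma ddX_fun [simp]: "pd (dX X j) (dirx i) = ddX X i j" by (simp add: ddX_def[abs_def])

lemma Xh1: "y \<in> S \<Longrightarrow> hvd (dX X k) v y (pd (dX X k) v y)"
  using Xh[of y "[dirx k]" v] by simp
lemma Xh2: "y \<in> S \<Longrightarrow> hvd (ddX X i j) v y (pd (ddX X i j) v y)"
  using Xh[of y "[dirx i, dirx j]" v] by simp

lemma ddX_sym: "y \<in> S \<Longrightarrow> ddX X i j y = ddX X j i y"
  using schwarzX[OF sm, of y "dirx i" "dirx j" "[]"] by simp

lemma third_sym: assumes y: "y \<in> S" shows "pd (ddX X k i) (dirx j) y = pd (ddX X j k) (dirx i) y"
proof -
  have "pd (ddX X k i) (dirx j) y = iterpd X [dirx j, dirx k, dirx i] y" by simp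
  also have "\<dots> = iterpd X [dirx k, dirx j, dirx i] y" by (rule schwarzX[OF sm y])
  also have "\<dots> = pd (iterpd X [dirx j, dirx i]) (dirx k) y" by simp
  also have "\<dots> = pd (iterpd X [dirx i, dirx j]) (dirx k) y"
    by (rule pd_local[OF S_open y]) (use schwarzX[OF sm, of _ "dirx j" "dirx i" "[]"] in simp)
  also have "\<dots> = iterpd X [dirx k, dirx i, dirx j] y" by simp
  also have "\<dots> = iterpd X [dirx i, dirx k, dirx j] y" by (rule schwarzX[OF sm y])
  also have "\<dots> = pd (ddX X k j) (dirx i) y" by simp
  also have "\<dots> = pd (ddX X j k) (dirx i) y"
    by (rule pd_local[OF S_open y]) (use ddX_sym in simp)
  finally show ?thesis .
qed

lemma pd_gmat: "y \<in> S \<Longrightarrow> pd (\<lambda>y. gmat X y $ a $ b) v y = mink (pd (dX X a) v y) (dX X b y) + mink (dX X a y) (pd (dX X b) v y)"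
  using hvd_pd[OF gmat_hvd] by simp

lemma pd_gmat_x: "y \<in> S \<Longrightarrow> pd (\<lambda>y. gmat X y $ a $ b) (dirx c) y = mink (ddX X c a y) (dX X b y) + mink (dX X a y) (ddX X c b y)"
  using pd_gmat[of y a b "dirx c"] by simp

lemma christoffel_eq:
  assumes y: "y \<in> S"
  shows "christoffel X k i j y = (\<Sum>l\<in>UNIV. ginv X y $ k $ l * mink (ddX X i j y) (dX X l y))"
proof -
  have "pd (\<lambda>y. gmat X y $ j $ l) (dirx i) y + pd (\<lambda>y. gmat X y $ i $ l) (dirx j) y - pd (\<lambda>y. gmat X y $ i $ j) (dirx l) y
        = 2 * mink (ddX X i j y) (dX X l y)" for l
    unfolding pd_gmat_x[OF y] using ddX_sym[OF y, of i j] ddX_sym[OF y, of i l] ddX_sym[OF y, of j l]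
    by (simp add: mink_sym)
  then show ?thesis unfolding christoffel_def by (simp add: sum_distrib_left)
qed

lemma mink_mcv:
  "mink w (mcv X y) = (\<Sum>i\<in>UNIV. \<Sum>j\<in>UNIV. ginv X y $ i $ j * (mink w (ddX X i j y)
      - (\<Sum>p\<in>UNIV. \<Sum>l\<in>UNIV. ginv X y $ p $ l * mink (ddX X i j y) (dX X l y) * mink w (dX X p y))))"
  unfolding mcv_def nproj_def tproj_def
  by (simp add: mink_simps sum_distrib_left right_diff_distrib mult.assoc)

lemma uA_hvd: "y \<in> S \<Longrightarrow> hvd (\<lambda>y. uA X A y) v y (- mink (eA A) (pd X v y))"
  unfolding uA_def using hvd_minus[OF hvd_mink[OF hvd_const Xh0]] by (simp add: mink_zero_left)

lemma ginv_symS: "y \<in> S \<Longrightarrow> ginv X y $ i $ j = ginv X y $ j $ i"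
  using ginv_sym sp by blast

lemma heat_uA: assumes z: "z \<in> S" shows "ddt (\<lambda>y. uA X A y) z - lapl X (\<lambda>y. uA X A y) z = 0"
proof -
  let ?e = "eA A"
  have d1: "pd (\<lambda>y. uA X A y) v y = - mink ?e (pd X v y)" if "y \<in> S" for v y using hvd_pd[OF uA_hvd[OF that]] .
  have d2: "pd (pd (\<lambda>y. uA X A y) (dirx j)) (dirx i) z = - mink ?e (ddX X i j z)" for i j
  proof -
    have "pd (pd (\<lambda>y. uA X A y) (dirx j)) (dirx i) z = pd (\<lambda>y. - mink ?e (dX X j y)) (dirx i) z"
      by (rule pd_local[OF S_open z]) (simp add: d1)
    also have "\<dots> = - mink ?e (ddX X i j z)"
      by (rule hvd_pd, rule hvd_cong[OF hvd_minus[OF hvd_mink[OF hvd_const Xh1[OF z]]]]) (simp add: mink_zero_left)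
    finally show ?thesis .
  qed
  have "ddt (\<lambda>y. uA X A y) z = - mink ?e (mcv X z)"
    using d1[OF z, of dirt] fl z by (simp add: ddt_def)
  moreover have "lapl X (\<lambda>y. uA X A y) z = - mink ?e (mcv X z)"
    unfolding lapl_def mink_mcv d2 d1[OF z] christoffel_eq[OF z]
    by (simp add: sum_distrib_left sum_distrib_right sum_negf right_diff_distrib mult_ac sum_subtractf)
  ultimately show ?thesis by simp
qed


lemma ginv_h: "y \<in> S \<Longrightarrow> hvd (\<lambda>y. ginv X y $ i $ j) v y (pd (\<lambda>y. ginv X y $ i $ j) v y)"
  by (rule Rc_hvd[OF Rc_ginv])

lemma mcv_normal_pd:
  assumes y: "y \<in> S" and w: "\<And>p. mink w (dX X p y) = 0"
  shows "pd (\<lambda>y'. mink w (mcv X y')) (dirx k) y = (\<Sum>i\<in>UNIV. \<Sum>j\<in>UNIV.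
      pd (\<lambda>y. ginv X y $ i $ j) (dirx k) y * mink w (ddX X i j y) + ginv X y $ i $ j * (mink w (pd (ddX X i j) (dirx k) y)
      - (\<Sum>p\<in>UNIV. \<Sum>l\<in>UNIV. ginv X y $ p $ l * mink (ddX X i j y) (dX X l y) * mink w (ddX X k p y))))"
proof -
  have eq: "(\<lambda>y'. mink w (mcv X y')) = (\<lambda>y. \<Sum>i\<in>UNIV. \<Sum>j\<in>UNIV. ginv X y $ i $ j * (mink w (ddX X i j y)
      - (\<Sum>p\<in>UNIV. \<Sum>l\<in>UNIV. ginv X y $ p $ l * mink (ddX X i j y) (dX X l y) * mink w (dX X p y))))"
    by (rule ext) (rule mink_mcv)
  show ?thesis unfolding eq
    apply (rule hvd_pd, rule hvd_cong)
     apply (rule hvd_sum, simp, rule hvd_sum, simp)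
     apply (rule hvd_mult, rule ginv_h[OF y])
     apply (rule hvd_diff, rule hvd_mink, rule hvd_const, rule Xh2[OF y])
     apply (rule hvd_sum, simp, rule hvd_sum, simp)
     apply (rule hvd_mult, rule hvd_mult, rule ginv_h[OF y])
      apply (rule hvd_mink, rule Xh2[OF y], rule Xh1[OF y])
     apply (rule hvd_mink, rule hvd_const, rule Xh1[OF y])
    apply (simp add: w mink_zero_left)
    done
qed

lemma Xt_normal:
  assumes y: "y \<in> S"
  shows "mink w (pd (dX X k) dirt y) = pd (\<lambda>y'. mink w (mcv X y')) (dirx k) y"
proof -
  have "pd (dX X k) dirt y = iterpd X [dirt, dirx k] y" by simp
  also have "\<dots> = iterpd X [dirx k, dirt] y" by (rule schwarzX[OF sm y])
  finally have 1: "pd (dX X k) dirt y = pd (ddt X) (dirx k) y" by (simp add: ddt_def[abs_def])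
  have 2: "mink w (pd (ddt X) (dirx k) y) = pd (\<lambda>y'. mink w (ddt X y')) (dirx k) y"
  proof -
    have "hvd (ddt X) (dirx k) y (pd (ddt X) (dirx k) y)"
      using Xh[OF y, of "[dirt]" "dirx k"] by (simp add: ddt_def[abs_def])
    from hvd_mink[OF hvd_const this, of w] show ?thesis by (simp add: hvd_pd[symmetric] mink_zero_left)
  qed
  have 3: "pd (\<lambda>y'. mink w (ddt X y')) (dirx k) y = pd (\<lambda>y'. mink w (mcv X y')) (dirx k) y"
    by (rule pd_local[OF S_open y]) (simp add: fl)
  show ?thesis using 1 2 3 by simp
qed

end


locale mcfz = mcf X S for X :: "'n::finite par \<Rightarrow> ('n, 'm::finite) amb" and S +
  fixes z :: "'n par" and A :: 'm
  assumes zS: "z \<in> S"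
begin

definition "e = (eA A :: ('n, 'm) amb)"
definition "H i j = ginv X z $ i $ j"
definition "x k = dX X k z"
definition "x2 i j = ddX X i j z"
definition "xi0 k = - (\<Sum>l\<in>UNIV. H k l * mink e (x l))"
definition "N = e + (\<Sum>k\<in>UNIV. xi0 k *\<^sub>R x k)"
definition "B i j = mink N (x2 i j)"
definition "Y i = (\<Sum>k\<in>UNIV. xi0 k *\<^sub>R x2 i k)"
definition "Lm k i = - (\<Sum>l\<in>UNIV. H k l * (B i l + mink (Y i) (x l)))"
definition "xi y k = xi0 k + (\<Sum>i\<in>UNIV. Lm k i * (snd y $ i - snd z $ i))"
definition "V y = (\<Sum>k\<in>UNIV. xi y k *\<^sub>R dX X k y)"
definition "phi y = - mink (e + V y) (e + V y)"
definition "u y = uA X A y"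
definition "psi y = phi y * exp ((u y)\<^sup>2)"
definition "f y = wsq X A y * exp ((u y)\<^sup>2)"

lemma spz: "spacelike_at X z" using sp zS by blast

lemma H_sym: "H i j = H j i" by (simp add: H_def ginv_sym[OF spz])

lemma mink_e_e: "mink e e = -1" by (simp add: e_def eA_def mink_def)

lemma N_nproj: "N = nproj X z e"
  by (simp add: N_def nproj_def tproj_alt xi0_def H_def x_def scaleR_sum_left[symmetric] sum_negf)

lemma N_perp: "mink N (x k) = 0" by (simp add: N_nproj x_def mink_nproj_X[OF spz])

lemma N_perp_span: "mink N (\<Sum>k\<in>UNIV. c k *\<^sub>R x k) = 0"
  by (simp add: mink_sum_right mink_scaleR_right N_perp)

lemma N_perp_tproj: "mink N (tproj X z w) = 0"
  unfolding tproj_alt using N_perp_span[of "\<lambda>i. \<Sum>j\<in>UNIV. ginv X z $ i $ j * mink w (dX X j z)"] by (simp add: x_def)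

lemma wsq_z: "wsq X A z = - mink N N" by (simp add: wsq_def N_nproj e_def)

lemma V_z: "V z = (\<Sum>k\<in>UNIV. xi0 k *\<^sub>R x k)" by (simp add: V_def xi_def x_def)

lemma eV_z: "e + V z = N" by (simp add: V_z N_def)

lemma phi_z: "phi z = wsq X A z" by (simp add: phi_def eV_z wsq_z)

lemma Rc_xi: "RcX S X (\<lambda>y. xi y k)"
  unfolding xi_def
  by (intro Rc.add Rc.const Rc_sum Rc.mult Rc_diff RcX_lin finite bounded_linear_compose[OF bounded_linear_vec_nth bounded_linear_snd])

lemma RvX_V: "RvX S X V"
  unfolding V_def[abs_def] by (intro RvX_sum RvX_scaleR Rc_xi RvX_dX finite)

lemma Rc_phi: "RcX S X phi"
  unfolding phi_def[abs_def] by (intro Rc_neg RcX_mink RvX_add RvX_const RvX_V)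

lemma Rc_u: "RcX S X u" unfolding u_def[abs_def] by (rule Rc_uA)

lemma Rc_psi: "RcX S X psi" unfolding psi_def[abs_def] by (intro Rc.mult Rc_phi Rc.expo Rc_power2 Rc_u)

lemma Rc_f: "RcX S X f" unfolding f_def[abs_def] by (intro Rc.mult Rc_wsq Rc.expo Rc_power2 Rc_u)

lemma sm_phi: "smooth_on S phi" by (rule Rc_sm[OF Rc_phi])
lemma sm_u: "smooth_on S u" by (rule Rc_sm[OF Rc_u])
lemma sm_psi: "smooth_on S psi" by (rule Rc_sm[OF Rc_psi])
lemma sm_f: "smooth_on S f" by (rule Rc_sm[OF Rc_f])

lemma barrier: "y \<in> S \<Longrightarrow> psi y \<le> f y"
proof -
  assume y: "y \<in> S"
  have "phi y \<le> wsq X A y"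
    unfolding phi_def V_def wsq_def e_def using wsq_barrier[of X y "eA A" "xi y"] sp y by auto
  then show ?thesis unfolding psi_def f_def by (simp add: mult_right_mono)
qed

lemma barrier_z: "psi z = f z" by (simp add: psi_def f_def phi_z)

definition "h y = f y - psi y"

lemma sm_h: "smooth_on S h" unfolding h_def[abs_def] by (rule Rc_sm[OF Rc_diff[OF Rc_f Rc_psi]])

lemma h_min: "\<forall>y\<in>S. h z \<le> h y" using barrier barrier_z by (simp add: h_def)

lemma pd_h: "y \<in> S \<Longrightarrow> pd h v y = pd f v y - pd psi v y"
  unfolding h_def[abs_def] by (rule hvd_pd[OF hvd_diff[OF smooth_hvd0[OF sm_f] smooth_hvd0[OF sm_psi]]])

lemma pd2_h: "pd (pd h w) v z = pd (pd f w) v z - pd (pd psi w) v z"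
proof -
  have "pd (pd h w) v z = pd (\<lambda>y. pd f w y - pd psi w y) v z"
    by (rule pd_local[OF S_open zS]) (simp add: pd_h)
  also have "\<dots> = pd (pd f w) v z - pd (pd psi w) v z"
    by (rule hvd_pd[OF hvd_diff]) (use smooth_hvd[OF sm_f zS, of "[w]"] smooth_hvd[OF sm_psi zS, of "[w]"] in simp_all)
  finally show ?thesis .
qed

lemma compare: "ddt f z - lapl X f z \<le> ddt psi z - lapl X psi z"
proof -
  have t: "ddt f z = ddt psi z" using min_first[OF sm_h zS h_min, of dirt] pd_h[OF zS] by (simp add: ddt_def)
  have k: "pd f (dirx k) z = pd psi (dirx k) z" for k using min_first[OF sm_h zS h_min, of "dirx k"] pd_h[OF zS] by simp
  have "0 \<le> (\<Sum>i\<in>UNIV. \<Sum>j\<in>UNIV. ginv X z $ i $ j * pd (pd h (dirx j)) (dirx i) z)"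
    by (rule min_trace[OF sm_h zS h_min]) (simp_all add: ginv_sym[OF spz] ginv_nonneg[OF spz])
  also have "\<dots> = lapl X f z - lapl X psi z"
    unfolding lapl_def pd2_h k by (simp add: sum_subtractf[symmetric] right_diff_distrib)
  finally show ?thesis using t by simp
qed


definition "Lw k w = (\<Sum>i\<in>UNIV. Lm k i * snd w $ i)"

lemma Lw_dirt: "Lw k dirt = 0" by (simp add: Lw_def dirt_def)
lemma Lw_dirx: "Lw k (dirx i) = Lm k i"
proof -
  have "(\<Sum>l\<in>UNIV. Lm k l * axis i 1 $ l) = (\<Sum>l\<in>UNIV. if l = i then Lm k l else 0)"
    by (rule sum.cong) (auto simp: axis_def)
  then show ?thesis by (simp add: Lw_def dirx_def)
qed

lemma xi_hvd: "hvd (\<lambda>y. xi y k) w y (Lw k w)"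
  unfolding xi_def[abs_def] Lw_def
  by (rule hvd_cong[OF hvd_add[OF hvd_const hvd_sum[OF finite hvd_mult[OF hvd_const hvd_diff[OF hvd_vec_nth[OF hvd_snd[OF hvd_id]] hvd_const]]]]]) simp

definition "V1 w y = (\<Sum>k\<in>UNIV. Lw k w *\<^sub>R dX X k y + xi y k *\<^sub>R pd (dX X k) w y)"

lemma V_hvd: "y \<in> S \<Longrightarrow> hvd V w y (V1 w y)"
  unfolding V_def[abs_def] V1_def by (rule hvd_sum[OF finite hvd_scaleR[OF xi_hvd Xh1]])

lemma pd_phi: "y \<in> S \<Longrightarrow> pd phi w y = -2 * mink (e + V y) (V1 w y)"
  unfolding phi_def[abs_def]
  by (rule hvd_pd, rule hvd_cong[OF hvd_minus[OF hvd_mink[OF hvd_add[OF hvd_const V_hvd] hvd_add[OF hvd_const V_hvd]]]])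
     (simp_all add: mink_sym[of "V1 w y"])

lemma V1_dirt: "V1 dirt z = (\<Sum>k\<in>UNIV. xi0 k *\<^sub>R pd (dX X k) dirt z)"
  by (simp add: V1_def Lw_dirt xi_def)

lemma V1_dirx: "V1 (dirx i) z = (\<Sum>k\<in>UNIV. Lm k i *\<^sub>R x k) + Y i"
  by (simp add: V1_def Lw_dirx xi_def x_def Y_def x2_def sum.distrib)

definition "V2 i j = (\<Sum>k\<in>UNIV. Lm k j *\<^sub>R x2 i k + Lm k i *\<^sub>R x2 j k + xi0 k *\<^sub>R pd (ddX X j k) (dirx i) z)"

lemma V1_hvd: "hvd (V1 (dirx j)) (dirx i) z (V2 i j)"
proof -
  have "V1 (dirx j) = (\<lambda>y. \<Sum>k\<in>UNIV. Lm k j *\<^sub>R dX X k y + xi y k *\<^sub>R ddX X j k y)"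
    by (simp add: V1_def[abs_def] Lw_dirx)
  moreover have "hvd (\<lambda>y. \<Sum>k\<in>UNIV. Lm k j *\<^sub>R dX X k y + xi y k *\<^sub>R ddX X j k y) (dirx i) z (V2 i j)"
    by (rule hvd_cong[OF hvd_sum[OF finite hvd_add[OF hvd_scaleR[OF hvd_const Xh1[OF zS]] hvd_scaleR[OF xi_hvd Xh2[OF zS]]]]])
      (simp add: V2_def Lw_dirx xi_def x2_def add.assoc)
  ultimately show ?thesis by simp
qed

lemma pd2_phi: "pd (pd phi (dirx j)) (dirx i) z = -2 * (mink (V1 (dirx i) z) (V1 (dirx j) z) + mink N (V2 i j))"
proof -
  have "pd (pd phi (dirx j)) (dirx i) z = pd (\<lambda>y. -2 * mink (e + V y) (V1 (dirx j) y)) (dirx i) z"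
    by (rule pd_local[OF S_open zS]) (simp add: pd_phi)
  also have "\<dots> = -2 * (mink (V1 (dirx i) z) (V1 (dirx j) z) + mink N (V2 i j))"
    by (rule hvd_pd, rule hvd_cong[OF hvd_mult[OF hvd_const hvd_mink[OF hvd_add[OF hvd_const V_hvd[OF zS]] V1_hvd]]])
       (simp add: eV_z)
  finally show ?thesis .
qed

lemma pd_phi_z: "pd phi w z = -2 * mink N (V1 w z)" using pd_phi[OF zS] by (simp add: eV_z)

lemma heat_psi:
  "ddt psi z - lapl X psi z = exp ((u z)\<^sup>2) * ((ddt phi z - lapl X phi z)
       - 2 * phi z * (1 + 2 * (u z)\<^sup>2) * (\<Sum>i\<in>UNIV. \<Sum>j\<in>UNIV. H i j * pd u (dirx i) z * pd u (dirx j) z)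
       - 4 * u z * (\<Sum>i\<in>UNIV. \<Sum>j\<in>UNIV. H i j * pd u (dirx i) z * pd phi (dirx j) z))"
proof -
  have "ddt u z - lapl X u z = 0" unfolding u_def[abs_def] by (rule heat_uA[OF zS])
  then show ?thesis
    using heat_prod_exp[OF sm_phi sm_u zS, of X] ginv_sym[OF spz]
    unfolding psi_def[abs_def] H_def by simp
qed

lemma pd_u_z: "pd u (dirx i) z = - mink e (x i)"
  using hvd_pd[OF uA_hvd[OF zS]] by (simp add: u_def[abs_def] e_def x_def)

end


context mcfz begin

definition "NY i = nproj X z (Y i)"
definition "dH k i j = pd (\<lambda>y. ginv X y $ i $ j) (dirx k) z"
definition "T3 k i j = mink N (pd (ddX X i j) (dirx k) z)"
definition "Cc i j l = mink (x2 i j) (x l)"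
definition "NV1 k = (\<Sum>l\<in>UNIV. xi0 l * B k l)"
definition "Bup i k = (\<Sum>l\<in>UNIV. H k l * B i l)"
definition "Yup i k = (\<Sum>l\<in>UNIV. H k l * mink (Y i) (x l))"
definition "Bsq = (\<Sum>i\<in>UNIV. \<Sum>j\<in>UNIV. H i j * (\<Sum>l\<in>UNIV. B i l * Bup j l))"
definition "W2 = (\<Sum>i\<in>UNIV. \<Sum>j\<in>UNIV. H i j * (\<Sum>k\<in>UNIV. Yup i k * B j k))"

lemma x2_sym: "x2 i j = x2 j i" by (simp add: x2_def ddX_sym[OF zS])
lemma B_sym: "B i j = B j i" by (simp add: B_def x2_sym)

lemma T3_rot: "T3 i j k = T3 k i j"
proof -
  have r: "T3 j k i = T3 i j k" for i j k by (simp add: T3_def third_sym[OF zS])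
  show ?thesis using r[of i j k] r[of j k i] by simp
qed

lemma Gam: "christoffel X k i j z = (\<Sum>l\<in>UNIV. H k l * Cc i j l)"
  by (simp add: christoffel_eq[OF zS] H_def Cc_def x2_def x_def)

lemma Lm_up: "Lm k i = - (Bup i k + Yup i k)"
  by (simp add: Lm_def Bup_def Yup_def distrib_left sum.distrib)

lemma NV1_eq: "mink N (V1 (dirx k) z) = NV1 k"
  by (simp add: V1_dirx mink_add_right N_perp Y_def mink_sum_right mink_scaleR_right NV1_def B_def)

lemma NV2_eq: "mink N (V2 i j) = (\<Sum>k\<in>UNIV. Lm k j * B i k + Lm k i * B j k + xi0 k * T3 i j k)"
  by (simp add: V2_def mink_sum_right mink_add_right mink_scaleR_right B_def T3_def)

lemma Nt_eq: "mink N (pd (dX X k) dirt z) = (\<Sum>i\<in>UNIV. \<Sum>j\<in>UNIV. dH k i j * B i j + H i j * (T3 k i j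
      - (\<Sum>p\<in>UNIV. \<Sum>l\<in>UNIV. H p l * Cc i j l * B k p)))"
  unfolding Xt_normal[OF zS] mcv_normal_pd[OF zS N_perp[unfolded x_def]]
  by (simp add: dH_def B_def H_def T3_def Cc_def x2_def x_def)

lemma ddt_phi: "ddt phi z = -2 * (\<Sum>k\<in>UNIV. xi0 k * mink N (pd (dX X k) dirt z))"
  by (simp add: ddt_def pd_phi_z V1_dirt mink_sum_right mink_scaleR_right)

lemma lapl_phi: "lapl X phi z = (\<Sum>i\<in>UNIV. \<Sum>j\<in>UNIV. H i j *
     (-2 * (mink (V1 (dirx i) z) (V1 (dirx j) z) + mink N (V2 i j)) - (\<Sum>k\<in>UNIV. (\<Sum>l\<in>UNIV. H k l * Cc i j l) * (-2 * NV1 k))))"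
  unfolding lapl_def pd2_phi pd_phi_z NV1_eq Gam by (simp add: H_def)

lemma dH_eq: "dH k i j = - (\<Sum>a\<in>UNIV. \<Sum>b\<in>UNIV. H i a * (Cc k a b + Cc k b a) * H b j)"
  using hvd_pd[OF ginv_hvd[OF zS, of i j "dirx k"]]
  by (simp add: dH_def pd_gmat_x[OF zS] H_def Cc_def x2_def x_def mink_sym)

lemma xi_Cc: "(\<Sum>k\<in>UNIV. xi0 k * Cc k a b) = mink (Y a) (x b)"
  by (simp add: Cc_def Y_def mink_sum_left mink_scaleR_left x2_sym)

lemma xi_dH: "(\<Sum>k\<in>UNIV. xi0 k * dH k i j) = - (\<Sum>a\<in>UNIV. \<Sum>b\<in>UNIV. H i a * (mink (Y a) (x b) + mink (Y b) (x a)) * H b j)"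
proof -
  have "(\<Sum>k\<in>UNIV. xi0 k * dH k i j) = - (\<Sum>a\<in>UNIV. \<Sum>b\<in>UNIV. H i a * (\<Sum>k\<in>UNIV. xi0 k * (Cc k a b + Cc k b a)) * H b j)"
    unfolding dH_eq
    by (simp add: sum_distrib_left sum_distrib_right sum_negf mult_ac) (subst sum.swap, rule sum.cong[OF refl], subst sum.swap, simp)
  also have "\<dots> = - (\<Sum>a\<in>UNIV. \<Sum>b\<in>UNIV. H i a * (mink (Y a) (x b) + mink (Y b) (x a)) * H b j)"
    by (simp add: distrib_left sum.distrib xi_Cc)
  finally show ?thesis .
qed


lemma sum3_rot: "(\<Sum>i\<in>UNIV. \<Sum>j\<in>UNIV. \<Sum>k\<in>UNIV. g i j k) = (\<Sum>k\<in>UNIV. \<Sum>i\<in>UNIV. \<Sum>j\<in>UNIV. g i j k)"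
proof -
  have "(\<Sum>i\<in>UNIV. \<Sum>j\<in>UNIV. \<Sum>k\<in>UNIV. g i j k) = (\<Sum>i\<in>UNIV. \<Sum>k\<in>UNIV. \<Sum>j\<in>UNIV. g i j k)"
    by (rule sum.cong[OF refl], rule sum.swap)
  also have "\<dots> = (\<Sum>k\<in>UNIV. \<Sum>i\<in>UNIV. \<Sum>j\<in>UNIV. g i j k)" by (rule sum.swap)
  finally show ?thesis .
qed

lemma sum3_rev: "(\<Sum>i\<in>UNIV. \<Sum>j\<in>UNIV. \<Sum>k\<in>UNIV. g i j k) = (\<Sum>k\<in>UNIV. \<Sum>j\<in>UNIV. \<Sum>i\<in>UNIV. g i j k)"
proof -
  have "(\<Sum>i\<in>UNIV. \<Sum>j\<in>UNIV. \<Sum>k\<in>UNIV. g i j k) = (\<Sum>k\<in>UNIV. \<Sum>i\<in>UNIV. \<Sum>j\<in>UNIV. g i j k)" by (rule sum3_rot)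
  also have "\<dots> = (\<Sum>k\<in>UNIV. \<Sum>j\<in>UNIV. \<Sum>i\<in>UNIV. g i j k)" by (rule sum.cong[OF refl], rule sum.swap)
  finally show ?thesis .
qed

lemma Yup_alt: "(\<Sum>b\<in>UNIV. mink (Y a) (x b) * H b j) = Yup a j"
  by (simp add: Yup_def H_sym[of _ j] mult.commute)

lemma W_partA: "(\<Sum>i\<in>UNIV. \<Sum>j\<in>UNIV. (\<Sum>a\<in>UNIV. \<Sum>b\<in>UNIV. H i a * mink (Y a) (x b) * H b j) * B i j) = W2"
proof -
  have "(\<Sum>i\<in>UNIV. \<Sum>j\<in>UNIV. (\<Sum>a\<in>UNIV. \<Sum>b\<in>UNIV. H i a * mink (Y a) (x b) * H b j) * B i j)
      = (\<Sum>i\<in>UNIV. \<Sum>j\<in>UNIV. \<Sum>a\<in>UNIV. H a i * Yup a j * B i j)"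
    by (simp add: sum_distrib_right mult.assoc sum_distrib_left[symmetric] Yup_alt) (simp add: H_sym)
  also have "\<dots> = (\<Sum>a\<in>UNIV. \<Sum>i\<in>UNIV. \<Sum>j\<in>UNIV. H a i * Yup a j * B i j)" by (rule sum3_rot)
  also have "\<dots> = W2" by (simp add: W2_def sum_distrib_left mult.assoc)
  finally show ?thesis .
qed

lemma W_partB: "(\<Sum>i\<in>UNIV. \<Sum>j\<in>UNIV. (\<Sum>a\<in>UNIV. \<Sum>b\<in>UNIV. H i a * mink (Y b) (x a) * H b j) * B i j) = W2"
proof -
  have "(\<Sum>i\<in>UNIV. \<Sum>j\<in>UNIV. (\<Sum>a\<in>UNIV. \<Sum>b\<in>UNIV. H i a * mink (Y b) (x a) * H b j) * B i j)
      = (\<Sum>i\<in>UNIV. \<Sum>j\<in>UNIV. \<Sum>b\<in>UNIV. H b j * Yup b i * B j i)"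
  proof (intro sum.cong refl)
    fix i j
    have "(\<Sum>a\<in>UNIV. \<Sum>b\<in>UNIV. H i a * mink (Y b) (x a) * H b j) = (\<Sum>b\<in>UNIV. \<Sum>a\<in>UNIV. H i a * mink (Y b) (x a) * H b j)"
      by (rule sum.swap)
    also have "\<dots> = (\<Sum>b\<in>UNIV. H b j * Yup b i)"
      by (simp add: Yup_def sum_distrib_left sum_distrib_right mult_ac)
    finally show "(\<Sum>a\<in>UNIV. \<Sum>b\<in>UNIV. H i a * mink (Y b) (x a) * H b j) * B i j = (\<Sum>b\<in>UNIV. H b j * Yup b i * B j i)"
      by (simp add: sum_distrib_right B_sym[of i j])
  qed
  also have "\<dots> = (\<Sum>b\<in>UNIV. \<Sum>j\<in>UNIV. \<Sum>i\<in>UNIV. H b j * Yup b i * B j i)" by (rule sum3_rev)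
  also have "\<dots> = W2" by (simp add: W2_def sum_distrib_left mult.assoc)
  finally show ?thesis .
qed

lemma W_dH: "(\<Sum>i\<in>UNIV. \<Sum>j\<in>UNIV. (\<Sum>k\<in>UNIV. xi0 k * dH k i j) * B i j) = - 2 * W2"
proof -
  have "(\<Sum>i\<in>UNIV. \<Sum>j\<in>UNIV. (\<Sum>k\<in>UNIV. xi0 k * dH k i j) * B i j)
     = - ((\<Sum>i\<in>UNIV. \<Sum>j\<in>UNIV. (\<Sum>a\<in>UNIV. \<Sum>b\<in>UNIV. H i a * mink (Y a) (x b) * H b j) * B i j)
        + (\<Sum>i\<in>UNIV. \<Sum>j\<in>UNIV. (\<Sum>a\<in>UNIV. \<Sum>b\<in>UNIV. H i a * mink (Y b) (x a) * H b j) * B i j))"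
    unfolding xi_dH by (simp add: left_diff_distrib right_diff_distrib sum_subtractf sum_negf distrib_left distrib_right sum.distrib)
  then show ?thesis unfolding W_partA W_partB by simp
qed

lemma Bsq_alt: "Bsq = (\<Sum>i\<in>UNIV. \<Sum>j\<in>UNIV. H i j * (\<Sum>k\<in>UNIV. Bup i k * B j k))"
  unfolding Bsq_def by (subst sum.swap) (simp add: H_sym mult.commute)

lemma W_Lm1: "(\<Sum>i\<in>UNIV. \<Sum>j\<in>UNIV. H i j * (\<Sum>k\<in>UNIV. Lm k i * B j k)) = - Bsq - W2"
  unfolding Lm_up Bsq_alt W2_def
  by (simp add: left_diff_distrib right_diff_distrib sum_subtractf sum_negf)

lemma W_Lm2: "(\<Sum>i\<in>UNIV. \<Sum>j\<in>UNIV. H i j * (\<Sum>k\<in>UNIV. Lm k j * B i k)) = - Bsq - W2"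
proof -
  have "(\<Sum>i\<in>UNIV. \<Sum>j\<in>UNIV. H i j * (\<Sum>k\<in>UNIV. Lm k j * B i k)) = (\<Sum>i\<in>UNIV. \<Sum>j\<in>UNIV. H i j * (\<Sum>k\<in>UNIV. Lm k i * B j k))"
    by (subst sum.swap) (simp add: H_sym)
  then show ?thesis using W_Lm1 by simp
qed

lemma W_NV2: "(\<Sum>i\<in>UNIV. \<Sum>j\<in>UNIV. H i j * mink N (V2 i j)) = - 2 * Bsq - 2 * W2 + (\<Sum>i\<in>UNIV. \<Sum>j\<in>UNIV. H i j * (\<Sum>k\<in>UNIV. xi0 k * T3 i j k))"
  using W_Lm1 W_Lm2 unfolding NV2_eq by (simp add: sum.distrib distrib_left)


lemma tproj_Y: "tproj X z (Y i) = (\<Sum>k\<in>UNIV. Yup i k *\<^sub>R x k)"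
  by (simp add: tproj_alt Yup_def H_def x_def)

lemma V1_decomp: "V1 (dirx i) z = NY i - (\<Sum>k\<in>UNIV. Bup i k *\<^sub>R x k)"
proof -
  have L: "(\<Sum>k\<in>UNIV. Lm k i *\<^sub>R x k) = - (\<Sum>k\<in>UNIV. Bup i k *\<^sub>R x k) - (\<Sum>k\<in>UNIV. Yup i k *\<^sub>R x k)"
    unfolding Lm_up by (simp add: scaleR_add_left scaleR_diff_left sum.distrib sum_negf[symmetric] sum_subtractf[symmetric])
  show ?thesis unfolding V1_dirx NY_def nproj_def tproj_Y L by (simp add: algebra_simps)
qed

lemma NY_perp: "mink (NY i) (x k) = 0" by (simp add: NY_def x_def mink_nproj_X[OF spz])

lemma G_Bup: "(\<Sum>p\<in>UNIV. mink (x k) (x p) * Bup j p) = B j k"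
proof -
  have "(\<Sum>p\<in>UNIV. mink (x k) (x p) * Bup j p) = (\<Sum>l\<in>UNIV. (\<Sum>p\<in>UNIV. gmat X z $ k $ p * ginv X z $ p $ l) * B j l)"
    by (simp add: Bup_def H_def x_def gmat_def sum_distrib_left sum_distrib_right mult_ac) (rule sum.swap)
  also have "\<dots> = B j k"
  proof -
    have e: "(\<Sum>p\<in>UNIV. gmat X z $ k $ p * ginv X z $ p $ l) = (if l = k then 1 else 0)" for l
      using gmat_ginv_entry[OF spz, of k l] by auto
    have "(\<Sum>l\<in>UNIV. (if l = k then 1 else 0) * B j l) = (\<Sum>l\<in>UNIV. if l = k then B j l else 0)"
      by (rule sum.cong) auto
    then show ?thesis by (simp add: e)
  qed
  finally show ?thesis .
qed

lemma VV_eq: "mink (V1 (dirx i) z) (V1 (dirx j) z) = mink (NY i) (NY j) + (\<Sum>k\<in>UNIV. Bup i k * B j k)"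
proof -
  have "mink (\<Sum>k\<in>UNIV. Bup i k *\<^sub>R x k) (\<Sum>p\<in>UNIV. Bup j p *\<^sub>R x p) = (\<Sum>k\<in>UNIV. Bup i k * (\<Sum>p\<in>UNIV. mink (x k) (x p) * Bup j p))"
    by (simp add: mink_sumsum sum_distrib_left mult_ac)
  also have "\<dots> = (\<Sum>k\<in>UNIV. Bup i k * B j k)" by (simp add: G_Bup)
  finally have 1: "mink (\<Sum>k\<in>UNIV. Bup i k *\<^sub>R x k) (\<Sum>p\<in>UNIV. Bup j p *\<^sub>R x p) = (\<Sum>k\<in>UNIV. Bup i k * B j k)" .
  have 2: "mink (NY i) (\<Sum>k\<in>UNIV. c k *\<^sub>R x k) = 0" for c i by (simp add: mink_sum_right mink_scaleR_right NY_perp)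
  have 3: "mink (\<Sum>k\<in>UNIV. c k *\<^sub>R x k) (NY i) = 0" for c i using 2 by (simp add: mink_sym)
  show ?thesis unfolding V1_decomp by (simp add: mink_diff_left mink_diff_right 1 2 3)
qed

definition "HNN = (\<Sum>i\<in>UNIV. \<Sum>j\<in>UNIV. H i j * mink (NY i) (NY j))"
definition "T3s = (\<Sum>i\<in>UNIV. \<Sum>j\<in>UNIV. H i j * (\<Sum>k\<in>UNIV. xi0 k * T3 i j k))"
definition "Gs = (\<Sum>i\<in>UNIV. \<Sum>j\<in>UNIV. H i j * (\<Sum>k\<in>UNIV. (\<Sum>l\<in>UNIV. H k l * Cc i j l) * NV1 k))"

lemma HVV: "(\<Sum>i\<in>UNIV. \<Sum>j\<in>UNIV. H i j * mink (V1 (dirx i) z) (V1 (dirx j) z)) = HNN + Bsq"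
  unfolding VV_eq HNN_def Bsq_alt by (simp add: distrib_left sum.distrib)

lemma T3_cancel: "(\<Sum>k\<in>UNIV. xi0 k * (\<Sum>i\<in>UNIV. \<Sum>j\<in>UNIV. H i j * T3 k i j)) = T3s"
proof -
  have "(\<Sum>k\<in>UNIV. xi0 k * (\<Sum>i\<in>UNIV. \<Sum>j\<in>UNIV. H i j * T3 k i j)) = (\<Sum>k\<in>UNIV. \<Sum>i\<in>UNIV. \<Sum>j\<in>UNIV. H i j * xi0 k * T3 i j k)"
    by (simp add: sum_distrib_left T3_rot mult_ac)
  also have "\<dots> = (\<Sum>i\<in>UNIV. \<Sum>j\<in>UNIV. \<Sum>k\<in>UNIV. H i j * xi0 k * T3 i j k)" by (rule sum3_rot[symmetric])
  also have "\<dots> = T3s" by (simp add: T3s_def sum_distrib_left mult_ac)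
  finally show ?thesis .
qed

lemma G_cancel: "(\<Sum>k\<in>UNIV. xi0 k * (\<Sum>i\<in>UNIV. \<Sum>j\<in>UNIV. H i j * (\<Sum>p\<in>UNIV. \<Sum>l\<in>UNIV. H p l * Cc i j l * B k p))) = Gs"
proof -
  define Q where "Q i j p = (\<Sum>l\<in>UNIV. H p l * Cc i j l)" for i j p
  have "(\<Sum>k\<in>UNIV. xi0 k * (\<Sum>i\<in>UNIV. \<Sum>j\<in>UNIV. H i j * (\<Sum>p\<in>UNIV. \<Sum>l\<in>UNIV. H p l * Cc i j l * B k p)))
      = (\<Sum>k\<in>UNIV. \<Sum>i\<in>UNIV. \<Sum>j\<in>UNIV. xi0 k * (H i j * (\<Sum>p\<in>UNIV. Q i j p * B k p)))"
    by (simp add: Q_def sum_distrib_left sum_distrib_right mult_ac)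
  also have "\<dots> = (\<Sum>i\<in>UNIV. \<Sum>j\<in>UNIV. \<Sum>k\<in>UNIV. xi0 k * (H i j * (\<Sum>p\<in>UNIV. Q i j p * B k p)))"
    by (rule sum3_rot[symmetric])
  also have "\<dots> = (\<Sum>i\<in>UNIV. \<Sum>j\<in>UNIV. H i j * (\<Sum>p\<in>UNIV. Q i j p * NV1 p))"
  proof (intro sum.cong refl)
    fix i j
    have "(\<Sum>k\<in>UNIV. xi0 k * (H i j * (\<Sum>p\<in>UNIV. Q i j p * B k p))) = H i j * (\<Sum>k\<in>UNIV. \<Sum>p\<in>UNIV. xi0 k * Q i j p * B k p)"
      by (simp add: sum_distrib_left mult_ac)
    also have "\<dots> = H i j * (\<Sum>p\<in>UNIV. \<Sum>k\<in>UNIV. xi0 k * Q i j p * B k p)" by (subst sum.swap) simp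
    also have "\<dots> = H i j * (\<Sum>p\<in>UNIV. Q i j p * NV1 p)"
      by (simp add: NV1_def sum_distrib_left B_sym mult_ac)
    finally show "(\<Sum>k\<in>UNIV. xi0 k * (H i j * (\<Sum>p\<in>UNIV. Q i j p * B k p))) = H i j * (\<Sum>p\<in>UNIV. Q i j p * NV1 p)" .
  qed
  also have "\<dots> = Gs" by (simp add: Gs_def Q_def)
  finally show ?thesis .
qed

lemma sum_xi_Nt: "(\<Sum>k\<in>UNIV. xi0 k * mink N (pd (dX X k) dirt z)) = - 2 * W2 + T3s - Gs"
proof -
  have "(\<Sum>k\<in>UNIV. xi0 k * mink N (pd (dX X k) dirt z))
     = (\<Sum>k\<in>UNIV. \<Sum>i\<in>UNIV. \<Sum>j\<in>UNIV. xi0 k * dH k i j * B i j)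
       + (\<Sum>k\<in>UNIV. xi0 k * (\<Sum>i\<in>UNIV. \<Sum>j\<in>UNIV. H i j * T3 k i j))
       - (\<Sum>k\<in>UNIV. xi0 k * (\<Sum>i\<in>UNIV. \<Sum>j\<in>UNIV. H i j * (\<Sum>p\<in>UNIV. \<Sum>l\<in>UNIV. H p l * Cc i j l * B k p)))"
    unfolding Nt_eq
    by (simp add: distrib_left right_diff_distrib sum.distrib sum_subtractf sum_distrib_left mult_ac)
  also have "(\<Sum>k\<in>UNIV. \<Sum>i\<in>UNIV. \<Sum>j\<in>UNIV. xi0 k * dH k i j * B i j) = (\<Sum>i\<in>UNIV. \<Sum>j\<in>UNIV. (\<Sum>k\<in>UNIV. xi0 k * dH k i j) * B i j)"
    by (subst sum3_rot[symmetric]) (simp add: sum_distrib_right)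
  finally show ?thesis unfolding W_dH T3_cancel G_cancel by simp
qed

lemma heat_phi: "ddt phi z - lapl X phi z = 2 * HNN - 2 * Bsq"
proof -
  have l: "lapl X phi z = -2 * (HNN + Bsq) - 2 * (- 2 * Bsq - 2 * W2 + T3s) + 2 * Gs"
  proof -
    have "lapl X phi z = -2 * (\<Sum>i\<in>UNIV. \<Sum>j\<in>UNIV. H i j * mink (V1 (dirx i) z) (V1 (dirx j) z))
        - 2 * (\<Sum>i\<in>UNIV. \<Sum>j\<in>UNIV. H i j * mink N (V2 i j)) + 2 * Gs"
      unfolding lapl_phi Gs_def
      by (simp add: distrib_left right_diff_distrib sum.distrib sum_subtractf sum_negf sum_distrib_left mult_ac)
    then show ?thesis unfolding HVV W_NV2 T3s_def by simp
  qed
  show ?thesis unfolding ddt_phi sum_xi_Nt l by simp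
qed

end


lemma discr_le:
  fixes a b c :: real
  assumes q: "\<And>t. a * t\<^sup>2 + 2 * b * t + c \<le> 0"
  shows "b\<^sup>2 \<le> a * c"
proof (cases "a = 0")
  case True
  have "b = 0"
  proof (rule ccontr)
    assume b: "b \<noteq> 0"
    have e: "2 * b * ((\<bar>c\<bar> + 1) / (2 * b)) = \<bar>c\<bar> + 1" using b by simp
    have "2 * b * ((\<bar>c\<bar> + 1) / (2 * b)) + c \<le> 0" using q[of "(\<bar>c\<bar> + 1) / (2 * b)"] True by simp
    then have "\<bar>c\<bar> + 1 + c \<le> 0" using e by simp
    then show False using abs_ge_minus_self[of c] by linarith
  qed
  then show ?thesis using True by simp
next
  case False
  have a: "a < 0"
  proof (rule ccontr)
    assume "\<not> a < 0" then have ap: "a > 0" using False by simp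
    define M where "M = 2 * \<bar>b\<bar> + \<bar>c\<bar> + 1"
    define t where "t = M / a + 1"
    have M0: "M \<ge> 1" by (simp add: M_def)
    have t1: "t \<ge> 1" using ap M0 by (simp add: t_def)
    have h1: "a * t \<ge> M" using ap by (simp add: t_def distrib_left)
    have h3: "t * (a * t) \<ge> t * M" using h1 t1 by (simp add: mult_left_mono)
    have h4: "t * M \<ge> 2 * \<bar>b\<bar> * t + \<bar>c\<bar> + 1"
    proof -
      have "t * (\<bar>c\<bar> + 1) \<ge> 1 * (\<bar>c\<bar> + 1)" using t1 by (intro mult_right_mono) auto
      then show ?thesis by (simp add: M_def algebra_simps)
    qed
    have h5: "2 * b * t \<ge> - (2 * \<bar>b\<bar> * t)"
    proof -
      have "- \<bar>b\<bar> * t \<le> b * t" using t1 by (intro mult_right_mono) auto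
      then show ?thesis by (simp add: algebra_simps)
    qed
    have "a * t\<^sup>2 = t * (a * t)" by (simp add: power2_eq_square)
    then have "a * t\<^sup>2 + 2 * b * t + c \<ge> 1" using h3 h4 h5 abs_ge_minus_self[of c] by linarith
    then show False using q[of t] by simp
  qed
  have "a * (- b / a)\<^sup>2 + 2 * b * (- b / a) + c \<le> 0" by (rule q)
  then have "c - b\<^sup>2 / a \<le> 0" using a by (simp add: power2_eq_square field_simps)
  then have "c \<le> b\<^sup>2 / a" by simp
  then have "a * (b\<^sup>2 / a) \<le> a * c" using a by (intro mult_left_mono_neg) auto
  then show ?thesis using a by simp
qed

lemma final_real:
  fixes W s Zs Bs K P u :: real
  assumes s: "s \<ge> 0" and W: "W = 1 + s" and Zs: "Zs \<ge> 0" and Bs: "Bs \<ge> 0" and K: "K \<ge> 0"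
    and i: "P\<^sup>2 \<le> s * K" and ii: "K \<le> s * Bs" and iii: "K \<le> W * Zs"
  shows "8 * u * P \<le> 2 * Zs + 2 * Bs + 4 * u\<^sup>2 * W * s"
proof (cases "s = 0")
  case True
  then have "P = 0" using i by simp
  then show ?thesis using Zs Bs True by simp
next
  case False
  then have sp: "s > 0" using s by simp
  have Wp: "W > 0" using W s by simp
  have "W * s * (2 * Zs) \<ge> 2 * s * K" using iii sp by (simp add: mult_left_mono mult_ac)
  moreover have "W * s * (2 * Bs) \<ge> 2 * W * K" using ii Wp by (simp add: mult_left_mono mult_ac)
  moreover have "2 * W * K \<ge> 2 * s * K" using W K by (simp add: mult_right_mono)
  moreover have "4 * s * K \<ge> 4 * P\<^sup>2" using i by simp
  ultimately have "W * s * (2 * Zs + 2 * Bs) - 4 * P\<^sup>2 \<ge> 0" by (simp add: algebra_simps)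
  moreover have "W * s * (2 * Zs + 2 * Bs + 4 * u\<^sup>2 * W * s - 8 * u * P) = (2 * u * W * s - 2 * P)\<^sup>2 + (W * s * (2 * Zs + 2 * Bs) - 4 * P\<^sup>2)"
    by (simp add: power2_eq_square algebra_simps)
  ultimately have "W * s * (2 * Zs + 2 * Bs + 4 * u\<^sup>2 * W * s - 8 * u * P) \<ge> 0" by simp
  then have "2 * Zs + 2 * Bs + 4 * u\<^sup>2 * W * s - 8 * u * P \<ge> 0"
    using mult_pos_pos[OF Wp sp] by (simp add: zero_le_mult_iff)
  then show ?thesis by simp
qed

lemma sum_sq_form:
  fixes p :: "'a \<Rightarrow> 'b \<Rightarrow> real"
  shows "(\<Sum>i\<in>I. \<Sum>j\<in>J. (\<Sum>a\<in>K. p a i * p a j) * F i * G j) = (\<Sum>a\<in>K. (\<Sum>i\<in>I. p a i * F i) * (\<Sum>j\<in>J. p a j * G j))"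
proof -
  have "(\<Sum>i\<in>I. \<Sum>j\<in>J. (\<Sum>a\<in>K. p a i * p a j) * F i * G j) = (\<Sum>i\<in>I. \<Sum>j\<in>J. \<Sum>a\<in>K. p a i * F i * (p a j * G j))"
    by (simp add: sum_distrib_left sum_distrib_right mult_ac)
  also have "\<dots> = (\<Sum>i\<in>I. \<Sum>a\<in>K. \<Sum>j\<in>J. p a i * F i * (p a j * G j))"
    by (rule sum.cong[OF refl], rule sum.swap)
  also have "\<dots> = (\<Sum>a\<in>K. \<Sum>i\<in>I. \<Sum>j\<in>J. p a i * F i * (p a j * G j))" by (rule sum.swap)
  also have "\<dots> = (\<Sum>a\<in>K. (\<Sum>i\<in>I. p a i * F i) * (\<Sum>j\<in>J. p a j * G j))"
    by (simp add: sum_product)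
  finally show ?thesis .
qed

lemma sum_sq_form_vec:
  fixes p :: "'a \<Rightarrow> 'b \<Rightarrow> real"
  shows "(\<Sum>i\<in>I. \<Sum>j\<in>J. (\<Sum>a\<in>K. p a i * p a j) * mink (F i) (G j)) = (\<Sum>a\<in>K. mink (\<Sum>i\<in>I. p a i *\<^sub>R F i) (\<Sum>j\<in>J. p a j *\<^sub>R G j))"
proof -
  have "(\<Sum>i\<in>I. \<Sum>j\<in>J. (\<Sum>a\<in>K. p a i * p a j) * mink (F i) (G j)) = (\<Sum>i\<in>I. \<Sum>j\<in>J. \<Sum>a\<in>K. p a i * p a j * mink (F i) (G j))"
    by (simp add: sum_distrib_right)
  also have "\<dots> = (\<Sum>i\<in>I. \<Sum>a\<in>K. \<Sum>j\<in>J. p a i * p a j * mink (F i) (G j))"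
    by (rule sum.cong[OF refl], rule sum.swap)
  also have "\<dots> = (\<Sum>a\<in>K. \<Sum>i\<in>I. \<Sum>j\<in>J. p a i * p a j * mink (F i) (G j))" by (rule sum.swap)
  also have "\<dots> = (\<Sum>a\<in>K. mink (\<Sum>i\<in>I. p a i *\<^sub>R F i) (\<Sum>j\<in>J. p a j *\<^sub>R G j))"
    by (simp add: mink_sumsum)
  finally show ?thesis .
qed


context mcfz begin

lemma normal_cs:
  assumes Z: "\<And>k. mink Z (x k) = 0"
  shows "(mink N Z)\<^sup>2 \<le> mink Z Z * mink N N"
proof (rule discr_le)
  fix t :: real
  have "mink (N + t *\<^sub>R Z) (N + t *\<^sub>R Z) \<le> 0"
    by (rule normal_nonpos[OF spz]) (simp add: mink_add_left mink_scaleR_left N_perp[unfolded x_def] Z[unfolded x_def])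
  moreover have "mink (N + t *\<^sub>R Z) (N + t *\<^sub>R Z) = mink Z Z * t\<^sup>2 + 2 * mink N Z * t + mink N N"
    by (simp add: mink_simps mink_sym[of Z N] power2_eq_square algebra_simps)
  ultimately show "mink Z Z * t\<^sup>2 + 2 * mink N Z * t + mink N N \<le> 0" by simp
qed

lemma NNY: "mink N (NY i) = NV1 i"
  by (simp add: NY_def nproj_def mink_diff_right N_perp_tproj Y_def mink_sum_right mink_scaleR_right NV1_def B_def)

lemma W_eq: "wsq X A z = 1 + (\<Sum>i\<in>UNIV. \<Sum>j\<in>UNIV. H i j * mink e (x i) * mink e (x j))"
proof -
  have nn: "mink N N = -1 + (\<Sum>k\<in>UNIV. xi0 k * mink e (x k))"
  proof -
    have "mink N N = mink N e + mink N (\<Sum>k\<in>UNIV. xi0 k *\<^sub>R x k)" by (subst (2) N_def) (simp add: mink_add_right)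
    also have "\<dots> = mink N e" by (simp add: N_perp_span)
    also have "\<dots> = -1 + (\<Sum>k\<in>UNIV. xi0 k * mink e (x k))"
    proof -
      have xs: "mink (x k) e = mink e (x k)" for k by (rule mink_sym)
      show ?thesis by (simp add: N_def mink_add_left mink_e_e mink_sum_left mink_scaleR_left xs)
    qed
    finally show ?thesis .
  qed
  have "(\<Sum>k\<in>UNIV. xi0 k * mink e (x k)) = - (\<Sum>i\<in>UNIV. \<Sum>j\<in>UNIV. H i j * mink e (x i) * mink e (x j))"
    by (simp add: xi0_def sum_distrib_left sum_distrib_right sum_negf mult_ac)
  then show ?thesis using nn by (simp add: wsq_z)
qed

lemma main_z: "ddt f z - lapl X f z \<le> -2 * exp ((u z)\<^sup>2) * wsq X A z * (wsq X A z - 1)"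
proof -
  define ue where "ue l = mink e (x l)" for l
  define s where "s = (\<Sum>i\<in>UNIV. \<Sum>j\<in>UNIV. H i j * ue i * ue j)"
  define W where "W = wsq X A z"
  define Bxx where "Bxx = (\<Sum>j\<in>UNIV. xi0 j * NV1 j)"
  have Wd: "W = 1 + s" by (simp add: W_def s_def ue_def W_eq)
  have Hpsd: "0 \<le> (\<Sum>i\<in>UNIV. \<Sum>j\<in>UNIV. v i * v j * H i j)" for v
    using ginv_nonneg[OF spz, of "\<chi> i. v i"] by (simp add: quad_def H_def)
  obtain p :: "'n \<Rightarrow> 'n \<Rightarrow> real" where p: "\<forall>i\<in>UNIV. \<forall>j\<in>UNIV. H i j = (\<Sum>a\<in>UNIV. p a i * p a j)"
    using psd_decomp[of "UNIV::'n set" H, OF finite H_sym Hpsd] by blast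
  have pH: "H i j = (\<Sum>a\<in>UNIV. p a i * p a j)" for i j using p by simp
  define q where "q a = (\<Sum>i\<in>UNIV. p a i * ue i)" for a
  define R where "R b i = (\<Sum>l\<in>UNIV. p b l * B i l)" for b i
  define Bt where "Bt a b = (\<Sum>i\<in>UNIV. p a i * R b i)" for a b
  define c where "c a = (\<Sum>b\<in>UNIV. Bt a b * q b)" for a
  define K where "K = (\<Sum>a\<in>UNIV. (c a)\<^sup>2)"
  define Z where "Z a = (\<Sum>i\<in>UNIV. p a i *\<^sub>R NY i)" for a
  have s_q: "s = (\<Sum>a\<in>UNIV. (q a)\<^sup>2)"
    unfolding s_def pH using sum_sq_form[where p=p and F=ue and G=ue and I=UNIV and J=UNIV and K=UNIV] by (simp add: q_def power2_eq_square)
  have xi_q: "xi0 j = - (\<Sum>a\<in>UNIV. p a j * q a)" for j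
  proof -
    have "(\<Sum>l\<in>UNIV. H j l * ue l) = (\<Sum>a\<in>UNIV. p a j * q a)"
      unfolding pH q_def by (simp add: sum_distrib_right sum_distrib_left mult_ac) (rule sum.swap)
    then show ?thesis by (simp add: xi0_def ue_def)
  qed
  have NV_q: "NV1 i = - (\<Sum>b\<in>UNIV. q b * R b i)" for i
  proof -
    have "NV1 i = - (\<Sum>l\<in>UNIV. \<Sum>b\<in>UNIV. p b l * q b * B i l)"
      by (simp add: NV1_def xi_q sum_distrib_right sum_distrib_left sum_negf mult_ac)
    also have "\<dots> = - (\<Sum>b\<in>UNIV. q b * R b i)"
      by (subst sum.swap) (simp add: R_def sum_distrib_left mult_ac)
    finally show ?thesis .
  qed
  have Bxx_c: "Bxx = (\<Sum>a\<in>UNIV. q a * c a)"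
  proof -
    have "Bxx = (\<Sum>j\<in>UNIV. \<Sum>b\<in>UNIV. \<Sum>a\<in>UNIV. q a * (q b * (p a j * R b j)))"
      by (simp add: Bxx_def xi_q NV_q sum_product mult_ac)
    also have "\<dots> = (\<Sum>a\<in>UNIV. \<Sum>b\<in>UNIV. \<Sum>j\<in>UNIV. q a * (q b * (p a j * R b j)))"
      by (rule sum3_rev)
    also have "\<dots> = (\<Sum>a\<in>UNIV. q a * c a)"
      by (simp add: c_def Bt_def sum_distrib_left mult_ac)
    finally show ?thesis .
  qed
  have Bsq_t: "Bsq = (\<Sum>a\<in>UNIV. \<Sum>b\<in>UNIV. (Bt a b)\<^sup>2)"
  proof -
    have inner: "(\<Sum>l\<in>UNIV. B i l * Bup j l) = (\<Sum>b\<in>UNIV. R b i * R b j)" for i j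
    proof -
      have "(\<Sum>l\<in>UNIV. B i l * Bup j l) = (\<Sum>l\<in>UNIV. \<Sum>q\<in>UNIV. H l q * B i l * B j q)"
        by (simp add: Bup_def sum_distrib_left mult_ac)
      also have "\<dots> = (\<Sum>b\<in>UNIV. R b i * R b j)"
        unfolding pH using sum_sq_form[where p=p and F="\<lambda>l. B i l" and G="\<lambda>q. B j q" and I=UNIV and J=UNIV and K=UNIV] by (simp add: R_def)
      finally show ?thesis .
    qed
    have "Bsq = (\<Sum>i\<in>UNIV. \<Sum>j\<in>UNIV. \<Sum>b\<in>UNIV. H i j * R b i * R b j)"
      by (simp add: Bsq_def inner sum_distrib_left mult_ac)
    also have "\<dots> = (\<Sum>b\<in>UNIV. \<Sum>i\<in>UNIV. \<Sum>j\<in>UNIV. H i j * R b i * R b j)" by (rule sum3_rot)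
    also have "\<dots> = (\<Sum>b\<in>UNIV. \<Sum>a\<in>UNIV. (Bt a b)\<^sup>2)"
    proof (rule sum.cong[OF refl])
      fix b
      show "(\<Sum>i\<in>UNIV. \<Sum>j\<in>UNIV. H i j * R b i * R b j) = (\<Sum>a\<in>UNIV. (Bt a b)\<^sup>2)"
        unfolding pH using sum_sq_form[where p=p and F="R b" and G="R b" and I=UNIV and J=UNIV and K=UNIV] by (simp add: Bt_def power2_eq_square)
    qed
    also have "\<dots> = (\<Sum>a\<in>UNIV. \<Sum>b\<in>UNIV. (Bt a b)\<^sup>2)" by (rule sum.swap)
    finally show ?thesis .
  qed
  have HNN_Z: "HNN = (\<Sum>a\<in>UNIV. mink (Z a) (Z a))"
    unfolding HNN_def pH Z_def by (rule sum_sq_form_vec)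
  have NZ: "mink N (Z a) = - c a" for a
  proof -
    have "mink N (Z a) = (\<Sum>i\<in>UNIV. p a i * NV1 i)" by (simp add: Z_def mink_sum_right mink_scaleR_right NNY)
    also have "\<dots> = - (\<Sum>i\<in>UNIV. \<Sum>b\<in>UNIV. q b * (p a i * R b i))"
      by (simp add: NV_q sum_distrib_left sum_negf mult_ac)
    also have "\<dots> = - c a"
      by (subst sum.swap) (simp add: c_def Bt_def sum_distrib_left mult_ac)
    finally show ?thesis .
  qed
  have Zperp: "mink (Z a) (x k) = 0" for a k by (simp add: Z_def mink_sum_left mink_scaleR_left NY_perp)
  have Wn: "W = - mink N N" by (simp add: W_def wsq_z)
  have s0: "s \<ge> 0" unfolding s_q by (simp add: sum_nonneg)
  have K0: "K \<ge> 0" unfolding K_def by (simp add: sum_nonneg)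
  have B0: "Bsq \<ge> 0" unfolding Bsq_t by (simp add: sum_nonneg)
  have ZZ: "- mink (Z a) (Z a) \<ge> 0" for a using normal_nonpos[OF spz, of "Z a"] Zperp by (simp add: x_def)
  have Z0: "- HNN \<ge> 0" unfolding HNN_Z using ZZ by (simp add: sum_nonneg sum_negf[symmetric])
  have i: "Bxx\<^sup>2 \<le> s * K" unfolding Bxx_c s_q K_def by (rule Cauchy_Schwarz_ineq_sum)
  have ii: "K \<le> s * Bsq"
  proof -
    have "(c a)\<^sup>2 \<le> (\<Sum>b\<in>UNIV. (Bt a b)\<^sup>2) * s" for a
      unfolding c_def s_q by (rule Cauchy_Schwarz_ineq_sum)
    then have "K \<le> (\<Sum>a\<in>UNIV. (\<Sum>b\<in>UNIV. (Bt a b)\<^sup>2) * s)" unfolding K_def by (rule sum_mono)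
    then show ?thesis by (simp add: Bsq_t sum_distrib_left[symmetric] mult.commute)
  qed
  have iii: "K \<le> W * (- HNN)"
  proof -
    have "(c a)\<^sup>2 \<le> W * (- mink (Z a) (Z a))" for a
      using normal_cs[OF Zperp, of a] NZ[of a] Wn by (simp add: mult.commute)
    then have "K \<le> (\<Sum>a\<in>UNIV. W * (- mink (Z a) (Z a)))" unfolding K_def by (rule sum_mono)
    then show ?thesis by (simp add: HNN_Z sum_distrib_left sum_negf)
  qed
  have fin: "8 * u z * Bxx \<le> 2 * (- HNN) + 2 * Bsq + 4 * (u z)\<^sup>2 * W * s"
    by (rule final_real[OF s0 Wd Z0 B0 K0 i ii iii])
  have s_u: "(\<Sum>i\<in>UNIV. \<Sum>j\<in>UNIV. H i j * pd u (dirx i) z * pd u (dirx j) z) = s"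
    by (simp add: pd_u_z s_def ue_def)
  have uphi: "(\<Sum>i\<in>UNIV. \<Sum>j\<in>UNIV. H i j * pd u (dirx i) z * pd phi (dirx j) z) = - 2 * Bxx"
  proof -
    have "(\<Sum>i\<in>UNIV. \<Sum>j\<in>UNIV. H i j * pd u (dirx i) z * pd phi (dirx j) z)
        = 2 * (\<Sum>j\<in>UNIV. (\<Sum>i\<in>UNIV. H j i * ue i) * NV1 j)"
      by (simp add: pd_u_z pd_phi_z NV1_eq ue_def sum_distrib_left sum_distrib_right mult_ac)
        (subst sum.swap, simp add: H_sym mult_ac)
    also have "\<dots> = - 2 * Bxx" by (simp add: Bxx_def xi0_def ue_def sum_distrib_left sum_negf)
    finally show ?thesis .
  qed
  have E0: "exp ((u z)\<^sup>2) > 0" by simp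
  have "ddt f z - lapl X f z \<le> ddt psi z - lapl X psi z" by (rule compare)
  also have "\<dots> = exp ((u z)\<^sup>2) * ((2 * HNN - 2 * Bsq) - 2 * W * (1 + 2 * (u z)\<^sup>2) * s + 8 * u z * Bxx)"
    unfolding heat_psi heat_phi s_u uphi phi_z W_def by simp
  also have "\<dots> \<le> exp ((u z)\<^sup>2) * (- 2 * W * s)"
  proof (rule mult_left_mono)
    show "2 * HNN - 2 * Bsq - 2 * W * (1 + 2 * (u z)\<^sup>2) * s + 8 * u z * Bxx \<le> - 2 * W * s"
      using fin by (simp add: algebra_simps)
  qed (use E0 in simp)
  also have "\<dots> = -2 * exp ((u z)\<^sup>2) * wsq X A z * (wsq X A z - 1)"
    using Wd by (simp add: W_def algebra_simps)
  finally show ?thesis .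
qed

end


theorem lemma3p8:
  fixes X :: "'n::finite par \<Rightarrow> ('n, 'm::finite) amb"
    and I :: "real set" and U :: "(real^'n) set" and A :: 'm
  assumes "open I" and "open U"
    and "smooth_on (I \<times> U) X"
    and "\<forall>z\<in>I \<times> U. spacelike_at X z"
    and "\<forall>z\<in>I \<times> U. ddt X z = mcv X z"
  shows "\<forall>z\<in>I \<times> U.
           ddt (\<lambda>y. wsq X A y * exp ((uA X A y)\<^sup>2)) z
           - lapl X (\<lambda>y. wsq X A y * exp ((uA X A y)\<^sup>2)) z
         \<le> - 2 * exp ((uA X A z)\<^sup>2) * wsq X A z * (wsq X A z - 1)"
proof
  fix z assume z: "z \<in> I \<times> U"
  interpret Z: mcfz X "I \<times> U" z A
    by unfold_locales (use assms z in auto)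
  have fe: "(\<lambda>y. wsq X A y * exp ((uA X A y)\<^sup>2)) = Z.f"
    by (simp add: Z.f_def[abs_def] Z.u_def[abs_def])
  show "ddt (\<lambda>y. wsq X A y * exp ((uA X A y)\<^sup>2)) z
           - lapl X (\<lambda>y. wsq X A y * exp ((uA X A y)\<^sup>2)) z
         \<le> - 2 * exp ((uA X A z)\<^sup>2) * wsq X A z * (wsq X A z - 1)"
    unfolding fe using Z.main_z by (simp add: Z.u_def)
qed

end
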